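(* For every $n\ge1$ and $d\ge1$ there is a quantum circuit (a unitary circuit on the input together with ancilla registers, some of which are traced out at the end) implementing a channel $\mathcal{C}^{(n)}$ such that for every pure state $\ket\psi\in\mathbb{C}^d$, $$\mathcal{C}^{(n)}\big(\ket\psi\bra\psi^{\otimes n}\big)=\mathbb{E}_{\theta\sim[0,2\pi)}\,\ket{\psi(\theta)}\bra{\psi(\theta)}^{\otimes n},$$ where $\theta$ is uniform on $[0,2\pi)$. Moreover this circuit has gate complexity $O(n^2\log d)$.
   Context: For $\ket\psi\in\mathbb{C}^d$ and $\theta\in[0,2\pi)$, the conditional sample is $\ket{\psi(\theta)}=\frac1{\sqrt2}\big(e^{i\theta}\ket0\ket0+\ket1\ket\psi\big)\in\mathbb{C}^2\otimes\mathbb{C}^d$. *)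

theory Defs
  imports "HOL-Analysis.Analysis"
begin

text \<open>Qubit circuit model. An m-qubit register has state space C^(2^m); basis index
  x < 2^m, qubit j being bit j of x. Operators are complex functions on index pairs.\<close>

definition bv :: "nat \<Rightarrow> nat \<Rightarrow> nat" where
  "bv x j = (if bit x j then 1 else 0)"

text \<open>A gate is an arbitrary two-qubit unitary U (4x4, basis index bv a + 2 * bv b)
  acting on two distinct qubits a, b.\<close>
type_synonym gate = "(nat \<Rightarrow> nat \<Rightarrow> complex) \<times> nat \<times> nat"

definition unitary4 :: "(nat \<Rightarrow> nat \<Rightarrow> complex) \<Rightarrow> bool" where
  "unitary4 U \<longleftrightarrow> (\<forall>i<4. \<forall>j<4. (\<Sum>l<4. U i l * cnj (U j l)) = (if i = j then 1 else 0))"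

definition valid_gate :: "nat \<Rightarrow> gate \<Rightarrow> bool" where
  "valid_gate m g \<longleftrightarrow> (case g of (U, a, b) \<Rightarrow> unitary4 U \<and> a < m \<and> b < m \<and> a \<noteq> b)"

definition gate_mat :: "nat \<Rightarrow> gate \<Rightarrow> nat \<Rightarrow> nat \<Rightarrow> complex" where
  "gate_mat m g x y = (case g of (U, a, b) \<Rightarrow>
     (if (\<forall>j<m. j \<noteq> a \<and> j \<noteq> b \<longrightarrow> bit x j = bit y j)
      then U (bv x a + 2 * bv x b) (bv y a + 2 * bv y b) else 0))"

definition conj_op :: "nat \<Rightarrow> (nat \<Rightarrow> nat \<Rightarrow> complex) \<Rightarrow> (nat \<Rightarrow> nat \<Rightarrow> complex)
    \<Rightarrow> nat \<Rightarrow> nat \<Rightarrow> complex" where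
  "conj_op N G \<rho> x y = (\<Sum>l<N. \<Sum>l'<N. G x l * \<rho> l l' * cnj (G y l'))"

text \<open>Run the gates in list order (first gate of the list is applied first).\<close>
fun evolve :: "nat \<Rightarrow> gate list \<Rightarrow> (nat \<Rightarrow> nat \<Rightarrow> complex) \<Rightarrow> nat \<Rightarrow> nat \<Rightarrow> complex" where
  "evolve m [] \<rho> = \<rho>"
| "evolve m (g # gs) \<rho> = evolve m gs (conj_op (2 ^ m) (gate_mat m g) \<rho>)"

text \<open>Channel of a circuit on m qubits: the input (k_in qubits) occupies qubits 0..<k_in,
  the ancilla qubits k_in..<m start in |0>, the unitary circuit is applied, and the qubits
  k_out..<m are traced out; the output lives on qubits 0..<k_out.\<close>
definition circuit_channel :: "nat \<Rightarrow> gate list \<Rightarrow> nat \<Rightarrow> nat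
    \<Rightarrow> (nat \<Rightarrow> nat \<Rightarrow> complex) \<Rightarrow> nat \<Rightarrow> nat \<Rightarrow> complex" where
  "circuit_channel m gs k_in k_out \<rho> a b =
     (let \<rho>0 = (\<lambda>x y. if x < 2 ^ k_in \<and> y < 2 ^ k_in then \<rho> x y else 0);
          \<sigma> = evolve m gs \<rho>0
      in (\<Sum>t<2 ^ (m - k_out). \<sigma> (a + 2 ^ k_out * t) (b + 2 ^ k_out * t)))"

text \<open>Number of qubits used to encode C^d: least k with d \<le> 2^k (C^d is embedded as the
  span of the first d basis states).\<close>
definition qbits :: "nat \<Rightarrow> nat" where
  "qbits d = (LEAST k. d \<le> 2 ^ k)"

definition ext_vec :: "nat \<Rightarrow> (nat \<Rightarrow> complex) \<Rightarrow> nat \<Rightarrow> complex" where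
  "ext_vec d \<psi> j = (if j < d then \<psi> j else 0)"

definition blk :: "nat \<Rightarrow> nat \<Rightarrow> nat \<Rightarrow> nat" where
  "blk s i z = (z div 2 ^ (i * s)) mod 2 ^ s"

text \<open>|psi><psi|^{\<otimes>n}, copy i on qubits i*k..<(i+1)*k, k = qbits d.\<close>
definition input_state :: "nat \<Rightarrow> nat \<Rightarrow> (nat \<Rightarrow> complex) \<Rightarrow> nat \<Rightarrow> nat \<Rightarrow> complex" where
  "input_state n d \<psi> z w =
     (\<Prod>i<n. ext_vec d \<psi> (blk (qbits d) i z)) * cnj (\<Prod>i<n. ext_vec d \<psi> (blk (qbits d) i w))"

text \<open>|psi(theta)> = (e^{i theta}|0>|0> + |1>|psi>)/sqrt 2 in C^2 \<otimes> C^d, encoded on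
  1 + qbits d qubits: the C^2 factor is the lowest qubit c mod 2, the C^d factor is c div 2.\<close>
definition cond_sample :: "nat \<Rightarrow> (nat \<Rightarrow> complex) \<Rightarrow> real \<Rightarrow> nat \<Rightarrow> complex" where
  "cond_sample d \<psi> \<theta> c =
     (if c mod 2 = 0 then (if c div 2 = 0 then exp (\<i> * of_real \<theta>) else 0)
      else ext_vec d \<psi> (c div 2)) / of_real (sqrt 2)"

text \<open>E_theta |psi(theta)><psi(theta)|^{\<otimes>n}, theta uniform on [0, 2 pi);
  copy i on qubits i*(k+1)..<(i+1)*(k+1).\<close>
definition target_state :: "nat \<Rightarrow> nat \<Rightarrow> (nat \<Rightarrow> complex) \<Rightarrow> nat \<Rightarrow> nat \<Rightarrow> complex" where
  "target_state n d \<psi> z w =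
     integral {0..2 * pi} (\<lambda>\<theta>.
        (\<Prod>i<n. cond_sample d \<psi> \<theta> (blk (qbits d + 1) i z))
        * cnj (\<Prod>i<n. cond_sample d \<psi> \<theta> (blk (qbits d + 1) i w))) / of_real (2 * pi)"

end

theory Submission
  imports Defs
begin

lemma less_pow2_iff: "(x::nat) < 2^m \<longleftrightarrow> (\<forall>p\<ge>m. \<not> bit x p)"
proof
  assume "x < 2^m" thus "\<forall>p\<ge>m. \<not> bit x p"
    by (metis bit_take_bit_iff leD take_bit_nat_eq_self)
next
  assume h: "\<forall>p\<ge>m. \<not> bit x p"
  have "take_bit m x = x" by (rule bit_eqI) (use h in \<open>auto simp: bit_take_bit_iff not_le\<close>)
  thus "x < 2^m" by (simp add: take_bit_nat_eq_self_iff)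
qed

definition gapp :: "nat \<Rightarrow> gate \<Rightarrow> (nat \<Rightarrow> complex) \<Rightarrow> nat \<Rightarrow> complex" where
  "gapp m g v x = (\<Sum>l<2^m. gate_mat m g x l * v l)"

fun run :: "nat \<Rightarrow> gate list \<Rightarrow> (nat \<Rightarrow> complex) \<Rightarrow> nat \<Rightarrow> complex" where
  "run m [] v = v"
| "run m (g # gs) v = run m gs (gapp m g v)"

lemma conj_op_outer:
  "conj_op N G (\<lambda>x y. v x * cnj (v y)) = (\<lambda>x y. (\<Sum>l<N. G x l * v l) * cnj (\<Sum>l<N. G y l * v l))"
  by (auto simp: conj_op_def sum_product cnj_sum mult_ac intro!: ext sum.cong)

lemma evolve_run:
  "evolve m gs (\<lambda>x y. v x * cnj (v y)) = (\<lambda>x y. run m gs v x * cnj (run m gs v y))"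
proof (induction gs arbitrary: v)
  case Nil thus ?case by simp
next
  case (Cons g gs)
  have "conj_op (2^m) (gate_mat m g) (\<lambda>x y. v x * cnj (v y)) = (\<lambda>x y. gapp m g v x * cnj (gapp m g v y))"
    unfolding conj_op_outer gapp_def by (rule refl)
  thus ?case using Cons by simp
qed

lemma run_append: "run m (gs1 @ gs2) v = run m gs2 (run m gs1 v)"
  by (induction gs1 arbitrary: v) auto

lemma run_cong: "(\<forall>y<2^m. v y = w y) \<Longrightarrow> x < 2^m \<Longrightarrow> run m gs v x = run m gs w x"
proof (induction gs arbitrary: v w x)
  case Nil thus ?case by simp
next
  case (Cons g gs)
  have "\<forall>y<2^m. gapp m g v y = gapp m g w y"
    using Cons.prems by (auto simp: gapp_def intro!: sum.cong)
  thus ?case using Cons by simp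
qed

definition sb :: "nat \<Rightarrow> bool \<Rightarrow> nat \<Rightarrow> nat" where
  "sb a p x = (if p then set_bit a x else unset_bit a x)"

lemma bit_sb: "bit (sb a p x) j = (if j = a then p else bit x j)"
  by (auto simp: sb_def bit_set_bit_iff bit_unset_bit_iff)

lemma sb_same[simp]: "sb a p (sb a q x) = sb a p x"
  by (rule bit_eqI) (simp add: bit_sb)

lemma sb_id: "bit x a = p \<Longrightarrow> sb a p x = x"
  by (rule bit_eqI) (auto simp: bit_sb)

lemma sb_bit[simp]: "sb a (bit x a) x = x"
  by (rule sb_id) simp

lemma sb_less: "x < 2^m \<Longrightarrow> a < m \<Longrightarrow> sb a p x < (2::nat)^m"
  by (auto simp: less_pow2_iff bit_sb)

lemma bv_sb: "bv (sb a p x) j = (if j = a then of_bool p else bv x j)"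
  by (simp add: bv_def bit_sb)

lemma gapp_formula:
  assumes x: "x < 2^m" and ab: "a < m" "b < m" "a \<noteq> b"
  shows "gapp m (U,a,b) v x = (\<Sum>p\<in>UNIV. \<Sum>q\<in>UNIV.
            U (bv x a + 2 * bv x b) (of_bool p + 2 * of_bool q) * v (sb b q (sb a p x)))"
proof -
  define y where "y = (\<lambda>(p,q). sb b q (sb a p x))"
  define S where "S = {l. l < (2::nat)^m \<and> (\<forall>j<m. j \<noteq> a \<and> j \<noteq> b \<longrightarrow> bit x j = bit l j)}"
  have yS: "y ` UNIV = S"
  proof
    show "y ` UNIV \<subseteq> S"
      using x ab by (auto simp: y_def S_def bit_sb intro!: sb_less)
    show "S \<subseteq> y ` UNIV"
    proof
      fix l assume l: "l \<in> S"
      have "l = y (bit l a, bit l b)"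
      proof (rule bit_eqI)
        fix j
        show "bit l j = bit (y (bit l a, bit l b)) j"
        proof (cases "j < m")
          case True thus ?thesis using l by (auto simp: S_def y_def bit_sb)
        next
          case False
          hence "\<not> bit l j" "\<not> bit x j" using l x by (auto simp: S_def less_pow2_iff)
          thus ?thesis using ab False by (auto simp: y_def bit_sb)
        qed
      qed
      thus "l \<in> y ` UNIV" by blast
    qed
  qed
  have inj: "inj y"
  proof (rule injI)
    fix u w assume "y u = y w"
    hence "bit (y u) a = bit (y w) a" "bit (y u) b = bit (y w) b" by auto
    thus "u = w" using ab by (cases u; cases w) (auto simp: y_def bit_sb)
  qed
  have "gapp m (U,a,b) v x = (\<Sum>l\<in>S. gate_mat m (U,a,b) x l * v l)"
    unfolding gapp_def
    by (rule sum.mono_neutral_right) (auto simp: S_def gate_mat_def)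
  also have "\<dots> = (\<Sum>u\<in>UNIV. gate_mat m (U,a,b) x (y u) * v (y u))"
    by (subst yS[symmetric], subst sum.reindex[OF inj]) simp
  also have "\<dots> = (\<Sum>u\<in>UNIV. U (bv x a + 2 * bv x b) (of_bool (fst u) + 2 * of_bool (snd u)) * v (y u))"
    using ab by (intro sum.cong refl) (clarsimp simp: gate_mat_def y_def bit_sb bv_sb numeral_3_eq_3 numeral_2_eq_2)
  also have "\<dots> = (\<Sum>p\<in>UNIV. \<Sum>q\<in>UNIV.
            U (bv x a + 2 * bv x b) (of_bool p + 2 * of_bool q) * v (sb b q (sb a p x)))"
    by (subst sum.cartesian_product) (simp add: y_def case_prod_beta)
  finally show ?thesis .
qed


lemma all4: "(\<forall>i<4. P i) = (P 0 \<and> P 1 \<and> P 2 \<and> P (3::nat))"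
  by (auto simp: numeral_eq_Suc less_Suc_eq)

lemma sum4: "(\<Sum>l<(4::nat). f l) = f 0 + f 1 + f 2 + f 3"
  by (simp add: numeral_eq_Suc)

lemma sb_other: "a \<noteq> b \<Longrightarrow> sb b (bit x b) (sb a p x) = sb a p x"
  by (rule sb_id) (simp add: bit_sb)

lemma sb_True_id[simp]: "bit x a \<Longrightarrow> sb a True x = x" by (simp add: sb_id)
lemma sb_False_id[simp]: "\<not> bit x a \<Longrightarrow> sb a False x = x" by (simp add: sb_id)

lemma sb_other_T[simp]: "bit x b \<Longrightarrow> a \<noteq> b \<Longrightarrow> sb b True (sb a p x) = sb a p x" by (simp add: sb_id bit_sb)
lemma sb_other_F[simp]: "\<not> bit x b \<Longrightarrow> a \<noteq> b \<Longrightarrow> sb b False (sb a p x) = sb a p x" by (simp add: sb_id bit_sb)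

definition pg :: "(bool \<Rightarrow> bool \<Rightarrow> bool) \<Rightarrow> (bool \<Rightarrow> bool \<Rightarrow> bool) \<Rightarrow> nat \<Rightarrow> nat \<Rightarrow> complex" where
  "pg P Q r s = of_bool (s = of_bool (P (odd r) (r div 2 = 1)) + 2 * of_bool (Q (odd r) (r div 2 = 1)))"

definition pmap :: "(bool \<Rightarrow> bool \<Rightarrow> bool) \<Rightarrow> (bool \<Rightarrow> bool \<Rightarrow> bool) \<Rightarrow> nat \<Rightarrow> nat \<Rightarrow> nat \<Rightarrow> nat" where
  "pmap P Q a b x = sb b (Q (bit x a) (bit x b)) (sb a (P (bit x a) (bit x b)) x)"

lemma bvsum_odd: "odd (bv x a + 2 * bv x b) = bit x a"
  by (simp add: bv_def)
lemma bvsum_div: "(bv x a + 2 * bv x b) div 2 = (if bit x b then 1 else 0)"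
  by (simp add: bv_def)

lemma of_bool_pair_eq: "((of_bool p + 2 * of_bool q :: nat) = of_bool p' + 2 * of_bool q') = (p = p' \<and> q = q')"
  by (cases p; cases q; cases p'; cases q') auto

lemma gapp_pg:
  assumes "x < 2^m" "a < m" "b < m" "a \<noteq> b"
  shows "gapp m (pg P Q, a, b) v x = v (pmap P Q a b x)"
  unfolding gapp_formula[OF assms] pg_def bvsum_odd bvsum_div of_bool_pair_eq
  by (cases "P (bit x a) (bit x b)"; cases "Q (bit x a) (bit x b)") (auto simp: UNIV_bool pmap_def)

lemma pmap_less: "x < 2^m \<Longrightarrow> a < m \<Longrightarrow> b < m \<Longrightarrow> pmap P Q a b x < 2^m"
  by (simp add: pmap_def sb_less)

definition "Xg = pg (\<lambda>p q. \<not> p) (\<lambda>p q. q)"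
definition "CNOTg = pg (\<lambda>p q. p \<noteq> q) (\<lambda>p q. q)"
definition "SWAPg = pg (\<lambda>p q. q) (\<lambda>p q. p)"

lemma unitary_Xg: "unitary4 Xg"
  unfolding unitary4_def all4 sum4 Xg_def pg_def by simp
lemma unitary_CNOTg: "unitary4 CNOTg"
  unfolding unitary4_def all4 sum4 CNOTg_def pg_def by simp
lemma unitary_SWAPg: "unitary4 SWAPg"
  unfolding unitary4_def all4 sum4 SWAPg_def pg_def by simp

definition h2 :: complex where "h2 = 1 / of_real (sqrt 2)"

lemma h2sq: "h2 * h2 = 1/2"
proof -
  have "complex_of_real (sqrt 2) * complex_of_real (sqrt 2) = 2" by (simp flip: of_real_mult)
  thus ?thesis unfolding h2_def by (simp add: field_simps)
qed

lemma cnj_h2[simp]: "cnj h2 = h2" by (simp add: h2_def)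

definition Uh :: "nat \<Rightarrow> nat \<Rightarrow> complex" where
  "Uh r s = (if r div 2 = s div 2 then (if odd r \<and> odd s then - h2 else h2) else 0)"

definition Ucp :: "complex \<Rightarrow> nat \<Rightarrow> nat \<Rightarrow> complex" where
  "Ucp w r s = (if r = s then (if r = 3 then w else 1) else 0)"

lemma unitary_Uh: "unitary4 Uh"
  unfolding unitary4_def all4 sum4 Uh_def by (simp add: h2sq)

lemma unitary_Ucp: "unitary4 (Ucp \<i>)" "unitary4 (Ucp (-\<i>))"
  unfolding unitary4_def all4 sum4 Ucp_def by simp_all

lemma gapp_Uh:
  assumes "x < 2^m" "a < m" "b < m" "a \<noteq> b"
  shows "gapp m (Uh, a, b) v x = h2 * v (sb a False x) + (if bit x a then - h2 else h2) * v (sb a True x)"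
  unfolding gapp_formula[OF assms] Uh_def bvsum_odd bvsum_div
  using assms(4) by (cases "bit x a"; cases "bit x b") (auto simp: UNIV_bool sb_other)

lemma gapp_Ucp:
  assumes "x < 2^m" "a < m" "b < m" "a \<noteq> b"
  shows "gapp m (Ucp w, a, b) v x = (if bit x a \<and> bit x b then w else 1) * v x"
  unfolding gapp_formula[OF assms] Ucp_def
  using assms(4) by (cases "bit x a"; cases "bit x b") (auto simp: UNIV_bool sb_other bv_def)


definition pm :: "nat \<Rightarrow> gate list \<Rightarrow> (nat \<Rightarrow> nat) \<Rightarrow> bool" where
  "pm m gs f \<longleftrightarrow> (\<forall>v x. x < 2^m \<longrightarrow> run m gs v x = v (f x)) \<and> (\<forall>x. x < 2^m \<longrightarrow> f x < 2^m)"

lemma pm_Nil: "pm m [] (\<lambda>x. x)" by (simp add: pm_def)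

lemma pm_append: "pm m g1 f1 \<Longrightarrow> pm m g2 f2 \<Longrightarrow> pm m (g1 @ g2) (\<lambda>x. f1 (f2 x))"
  by (simp add: pm_def run_append)

lemma pm_cong: "pm m gs f \<Longrightarrow> (\<And>x. x < 2^m \<Longrightarrow> f x = f' x) \<Longrightarrow> pm m gs f'"
  by (simp add: pm_def)

lemma pm_pg: "a < m \<Longrightarrow> b < m \<Longrightarrow> a \<noteq> b \<Longrightarrow> pm m [(pg P Q, a, b)] (pmap P Q a b)"
  by (simp add: pm_def gapp_pg pmap_less)

lemma h2h2: "h2 * (h2 * z) = z / 2"
  using h2sq by (metis mult.assoc mult.commute times_divide_eq_left mult_1)

definition "cczg c p q = [(Ucp \<i>, p, q), (CNOTg, p, c), (Ucp (-\<i>), p, q), (CNOTg, p, c), (Ucp \<i>, c, q)]"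

lemma run_ccz:
  assumes "x < 2^m" "c < m" "p < m" "q < m" "c \<noteq> p" "c \<noteq> q" "p \<noteq> q"
  shows "run m (cczg c p q) v x = (if bit x c \<and> bit x p \<and> bit x q then -1 else 1) * v x"
  using assms
  by (cases "bit x c"; cases "bit x p"; cases "bit x q")
     (simp_all add: cczg_def gapp_Ucp gapp_pg CNOTg_def pmap_def bit_sb sb_less sb_other)

definition "toffg c p q = [(Uh, q, p)] @ cczg c p q @ [(Uh, q, p)]"
definition "toffmap c p q x = sb q (bit x q \<noteq> (bit x c \<and> bit x p)) x"

lemma pm_toff:
  assumes "c < m" "p < m" "q < m" "c \<noteq> p" "c \<noteq> q" "p \<noteq> q"
  shows "pm m (toffg c p q) (toffmap c p q)"
  unfolding pm_def
proof (intro conjI allI impI)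
  fix v x assume x: "x < (2::nat)^m"
  show "run m (toffg c p q) v x = v (toffmap c p q x)"
    using assms x
    by (cases "bit x c"; cases "bit x p"; cases "bit x q")
       (simp_all add: toffg_def toffmap_def run_append run_ccz gapp_Uh sb_less bit_sb h2h2 field_simps)
next
  fix x :: nat assume "x < 2^m" thus "toffmap c p q x < 2^m" using assms by (simp add: toffmap_def sb_less)
qed

definition "fredg c p q = [(CNOTg, p, q)] @ toffg c p q @ [(CNOTg, p, q)]"
definition "swapb p q x = sb p (bit x q) (sb q (bit x p) x)"
definition "fredmap c p q x = (if bit x c then swapb p q x else x)"

lemma bit_fredmap:
  "c \<noteq> p \<Longrightarrow> c \<noteq> q \<Longrightarrow> p \<noteq> q \<Longrightarrow> bit (fredmap c p q x) r =
    (if bit x c \<and> r = p then bit x q else if bit x c \<and> r = q then bit x p else bit x r)"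
  by (auto simp: fredmap_def swapb_def bit_sb)

lemma pm_fred:
  assumes "c < m" "p < m" "q < m" "c \<noteq> p" "c \<noteq> q" "p \<noteq> q"
  shows "pm m (fredg c p q) (fredmap c p q)"
proof -
  let ?cn = "pmap (\<lambda>a b. a \<noteq> b) (\<lambda>a b. b) p q"
  have "pm m (fredg c p q) (\<lambda>x. ?cn (toffmap c p q (?cn x)))"
    unfolding fredg_def CNOTg_def
    by (intro pm_append pm_pg pm_toff) (use assms in auto)
  thus ?thesis
  proof (rule pm_cong)
    fix x :: nat
    show "?cn (toffmap c p q (?cn x)) = fredmap c p q x"
      by (rule bit_eqI) (use assms in \<open>auto simp: pmap_def toffmap_def bit_sb bit_fredmap\<close>)
  qed
qed

definition vg :: "nat \<Rightarrow> gate list \<Rightarrow> bool" where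
  "vg m gs \<longleftrightarrow> (\<forall>g\<in>set gs. valid_gate m g)"

lemma vg_append[simp]: "vg m (xs @ ys) \<longleftrightarrow> vg m xs \<and> vg m ys"
  by (auto simp: vg_def)
lemma vg_Nil[simp]: "vg m []" by (simp add: vg_def)
lemma vg_Cons[simp]: "vg m (g # gs) \<longleftrightarrow> valid_gate m g \<and> vg m gs" by (simp add: vg_def)

lemma vg_fred:
  assumes "c < m" "p < m" "q < m" "c \<noteq> p" "c \<noteq> q" "p \<noteq> q"
  shows "vg m (fredg c p q)"
  using assms
  by (simp add: fredg_def toffg_def cczg_def valid_gate_def unitary_CNOTg unitary_Uh unitary_Ucp)


lemma bit_blk: "bit (blk s i z) b \<longleftrightarrow> b < s \<and> bit z (i * s + b)"
  by (simp add: blk_def bit_take_bit_iff bit_drop_bit_eq flip: take_bit_eq_mod drop_bit_eq_div)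

lemma pos_div: "t < Suc k \<Longrightarrow> (j * Suc k + t) div Suc k = j"
proof -
  assume t: "t < Suc k"
  have "(t + j * Suc k) div Suc k = j + t div Suc k" by (rule div_mult_self1) simp
  thus ?thesis using t by (simp only: add.commute) simp
qed
lemma pos_mod: "t < Suc k \<Longrightarrow> (j * Suc k + t) mod Suc k = t"
proof -
  assume t: "t < Suc k"
  have "(t + j * Suc k) mod Suc k = t mod Suc k" by (rule mod_mult_self1)
  thus ?thesis using t by (simp only: add.commute) simp
qed

lemma pos_eq: "t < Suc k \<Longrightarrow> (r = j * Suc k + t) \<longleftrightarrow> (r div Suc k = j \<and> r mod Suc k = t)"
  by (metis div_mult_mod_eq mult.commute pos_div pos_mod)

lemma div_ge: "a * Suc k \<le> c \<Longrightarrow> a \<le> c div Suc k"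
  by (metis div_le_mono nonzero_mult_div_cancel_right nat.simps(3))

primrec rsg :: "nat \<Rightarrow> nat \<Rightarrow> nat \<Rightarrow> nat \<Rightarrow> gate list" where
  "rsg k c j 0 = []"
| "rsg k c j (Suc t) = fredg c (j * Suc k + t) (Suc j * Suc k + t) @ rsg k c j t"

primrec rsw :: "nat \<Rightarrow> nat \<Rightarrow> nat \<Rightarrow> nat \<Rightarrow> nat \<Rightarrow> nat" where
  "rsw k c j 0 x = x"
| "rsw k c j (Suc t) x = fredmap c (j * Suc k + t) (Suc j * Suc k + t) (rsw k c j t x)"

lemma pm_rsw:
  assumes "Suc (Suc j) * Suc k \<le> c" "c < m" "t \<le> Suc k"
  shows "pm m (rsg k c j t) (rsw k c j t) \<and> vg m (rsg k c j t)"
  using assms(3)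
proof (induction t)
  case 0 thus ?case by (simp add: pm_Nil)
next
  case (Suc t)
  have lt: "j * Suc k + t < c" "Suc j * Suc k + t < c" using assms(1) Suc.prems by auto
  have "pm m (fredg c (j * Suc k + t) (Suc j * Suc k + t) @ rsg k c j t)
            (\<lambda>x. fredmap c (j * Suc k + t) (Suc j * Suc k + t) (rsw k c j t x))"
    by (rule pm_append[OF pm_fred]) (use lt assms Suc in auto)
  moreover have "vg m (fredg c (j * Suc k + t) (Suc j * Suc k + t))"
    by (rule vg_fred) (use lt assms in auto)
  ultimately show ?case using Suc by simp
qed

lemma bit_rsw:
  assumes "Suc (Suc j) * Suc k \<le> c" "t \<le> Suc k"
  shows "bit (rsw k c j t x) r = (if bit x c \<and> r div Suc k = j \<and> r mod Suc k < t then bit x (r + Suc k)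
     else if bit x c \<and> r div Suc k = Suc j \<and> r mod Suc k < t then bit x (r - Suc k) else bit x r)"
  using assms(2)
proof (induction t arbitrary: r)
  case 0 thus ?case by simp
next
  case (Suc t)
  have cd: "Suc (Suc j) \<le> c div Suc k" using div_ge[OF assms(1)] .
  have yc: "bit (rsw k c j t x) c = bit x c" using Suc.IH[of c] Suc.prems cd by auto
  have t: "t < Suc k" using Suc.prems by simp
  have P: "(j * Suc k + t) div Suc k = j" "(j * Suc k + t) mod Suc k = t"
          "(Suc j * Suc k + t) div Suc k = Suc j" "(Suc j * Suc k + t) mod Suc k = t"
    using t by (simp_all only: pos_div pos_mod)
  have ne: "c \<noteq> j * Suc k + t" "c \<noteq> Suc j * Suc k + t" "j * Suc k + t \<noteq> Suc j * Suc k + t"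
    using assms(1) t by auto
  let ?y = "rsw k c j t x"
  have IHr: "bit ?y r' = (if bit x c \<and> r' div Suc k = j \<and> r' mod Suc k < t then bit x (r' + Suc k)
     else if bit x c \<and> r' div Suc k = Suc j \<and> r' mod Suc k < t then bit x (r' - Suc k) else bit x r')" for r'
    using Suc.IH Suc.prems by simp
  have PQ: "j * Suc k + t + Suc k = Suc j * Suc k + t" "Suc j * Suc k + t - Suc k = j * Suc k + t" by simp_all
  show ?case
  proof (cases "bit x c")
    case False thus ?thesis unfolding rsw.simps bit_fredmap[OF ne] yc using cd by (simp add: IHr)
  next
    case True
    show ?thesis
    proof (cases "r = j * Suc k + t")
      case True thus ?thesis unfolding rsw.simps bit_fredmap[OF ne] yc
        using P PQ `bit x c` cd by (simp add: IHr ac_simps)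
    next
      case rP: False
      show ?thesis
      proof (cases "r = Suc j * Suc k + t")
        case True thus ?thesis unfolding rsw.simps bit_fredmap[OF ne] yc
          using P PQ `bit x c` cd ne by (simp add: IHr ac_simps)
      next
        case False
        have "r div Suc k = j \<longrightarrow> r mod Suc k \<noteq> t" "r div Suc k = Suc j \<longrightarrow> r mod Suc k \<noteq> t"
          using rP False pos_eq[OF t, of r j] pos_eq[OF t, of r "Suc j"] by auto
        thus ?thesis unfolding rsw.simps bit_fredmap[OF ne] yc using rP False `bit x c` cd
          by (auto simp: less_Suc_eq IHr)
      qed
    qed
  qed
qed

declare rsw.simps(2)[simp del]

lemma bit_RS_c:
  assumes "Suc (Suc j) * Suc k \<le> c" "Suc (Suc j) * Suc k \<le> c'"
  shows "bit (rsw k c j (Suc k) x) c' = bit x c'"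
  using div_ge[OF assms(2)] by (simp add: bit_rsw[OF assms(1) order.refl])

lemma reg_RS:
  assumes "Suc (Suc j) * Suc k \<le> c"
  shows "blk (Suc k) j' (rsw k c j (Suc k) x) = (if bit x c then (if j' = j then blk (Suc k) (Suc j) x
           else if j' = Suc j then blk (Suc k) j x else blk (Suc k) j' x) else blk (Suc k) j' x)"
proof (rule bit_eqI)
  fix b
  show "bit (blk (Suc k) j' (rsw k c j (Suc k) x)) b = bit (if bit x c then (if j' = j then blk (Suc k) (Suc j) x
           else if j' = Suc j then blk (Suc k) j x else blk (Suc k) j' x) else blk (Suc k) j' x) b"
  proof (cases "b < Suc k")
    case True
    have d: "(j' * Suc k + b) div Suc k = j'" "(j' * Suc k + b) mod Suc k = b"
      using True by (simp_all only: pos_div pos_mod)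
    show ?thesis unfolding bit_blk bit_rsw[OF assms(1) order.refl] d using True by (simp add: ac_simps bit_blk)
  next
    case False thus ?thesis by (simp add: bit_blk)
  qed
qed

primrec rotg :: "nat \<Rightarrow> nat \<Rightarrow> nat \<Rightarrow> nat \<Rightarrow> gate list" where
  "rotg k c i 0 = []"
| "rotg k c i (Suc L) = rotg k c (Suc i) L @ rsg k c i (Suc k)"

primrec rotm :: "nat \<Rightarrow> nat \<Rightarrow> nat \<Rightarrow> nat \<Rightarrow> nat \<Rightarrow> nat" where
  "rotm k c i 0 x = x"
| "rotm k c i (Suc L) x = rotm k c (Suc i) L (rsw k c i (Suc k) x)"

lemma pm_rot:
  assumes "Suc (i + L) * Suc k \<le> c" "c < m"
  shows "pm m (rotg k c i L) (rotm k c i L) \<and> vg m (rotg k c i L)"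
  using assms(1)
proof (induction L arbitrary: i)
  case 0 thus ?case by (simp add: pm_Nil)
next
  case (Suc L)
  have a: "Suc (Suc i) * Suc k \<le> c" by (rule le_trans[OF mult_le_mono1 Suc.prems(1)]) simp
  have b: "Suc (Suc i + L) * Suc k \<le> c" using Suc.prems by simp
  show ?case using pm_append[OF conjunct1[OF Suc.IH[OF b]] conjunct1[OF pm_rsw[OF a assms(2) order.refl]]]
    conjunct2[OF Suc.IH[OF b]] conjunct2[OF pm_rsw[OF a assms(2) order.refl]] by simp
qed

lemma bit_rot_c:
  assumes "Suc (i + L) * Suc k \<le> c" "Suc (i + L) * Suc k \<le> c'"
  shows "bit (rotm k c i L x) c' = bit x c'"
  using assms
proof (induction L arbitrary: i x)
  case 0 thus ?case by simp
next
  case (Suc L)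
  have a: "Suc (Suc i) * Suc k \<le> c" "Suc (Suc i) * Suc k \<le> c'"
    by (rule le_trans[OF mult_le_mono1 Suc.prems(1)], simp) (rule le_trans[OF mult_le_mono1 Suc.prems(2)], simp)
  have b: "Suc (Suc i + L) * Suc k \<le> c" "Suc (Suc i + L) * Suc k \<le> c'" using Suc.prems by simp_all
  show ?case using Suc.IH[OF b] bit_RS_c[OF a(1) a(2)] by simp
qed

lemma reg_rot:
  assumes "Suc (i + L) * Suc k \<le> c"
  shows "blk (Suc k) j (rotm k c i L x) = (if bit x c then (if i \<le> j \<and> j < i + L then blk (Suc k) (Suc j) x
           else if j = i + L then blk (Suc k) i x else blk (Suc k) j x) else blk (Suc k) j x)"
  using assms
proof (induction L arbitrary: i x j)
  case 0 thus ?case by simp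
next
  case (Suc L)
  have a: "Suc (Suc i) * Suc k \<le> c" by (rule le_trans[OF mult_le_mono1 Suc.prems(1)]) simp
  have b: "Suc (Suc i + L) * Suc k \<le> c" using Suc.prems by simp
  have cc: "bit (rsw k c i (Suc k) x) c = bit x c" using bit_RS_c[OF a a] .
  show ?case unfolding rotm.simps Suc.IH[OF b] cc reg_RS[OF a] by auto
qed


definition cpos :: "nat \<Rightarrow> nat \<Rightarrow> nat \<Rightarrow> nat" where "cpos n k i = 2 * n * Suc k + i"
definition mm :: "nat \<Rightarrow> nat \<Rightarrow> nat" where "mm n k = 2 * n * Suc k + n"

definition gv :: "nat \<Rightarrow> (nat \<Rightarrow> complex) \<Rightarrow> nat \<Rightarrow> complex" where
  "gv d \<psi> R = (if odd R then ext_vec d \<psi> (R div 2) else of_bool (R = 0))"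

definition GG :: "nat \<Rightarrow> nat \<Rightarrow> nat \<Rightarrow> (nat \<Rightarrow> complex) \<Rightarrow> nat \<Rightarrow> complex" where
  "GG n k d \<psi> x = (\<Prod>j<2*n. gv d \<psi> (blk (Suc k) j x))"

definition ones :: "nat \<Rightarrow> nat \<Rightarrow> nat \<Rightarrow> nat \<Rightarrow> nat" where
  "ones n k i x = card {j. j < i \<and> bit x (cpos n k j)}"

definition cinv :: "nat \<Rightarrow> nat \<Rightarrow> nat \<Rightarrow> nat \<Rightarrow> bool" where
  "cinv n k i x \<longleftrightarrow> (\<forall>j<i. odd (blk (Suc k) j x) = bit x (cpos n k j)) \<and>
     (\<forall>j. i \<le> j \<and> j < 2*n \<longrightarrow> odd (blk (Suc k) j x) = (n + ones n k i x \<le> j))"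

definition Phi :: "nat \<Rightarrow> nat \<Rightarrow> nat \<Rightarrow> (nat \<Rightarrow> complex) \<Rightarrow> nat \<Rightarrow> nat \<Rightarrow> complex" where
  "Phi n k d \<psi> i x = h2 ^ n * GG n k d \<psi> x * of_bool (cinv n k i x)"

definition "stepg n k i = rotg k (cpos n k i) i (2 * n - 1 - i)"
definition "stepm n k i = rotm k (cpos n k i) i (2 * n - 1 - i)"

lemma step_pm:
  assumes "i < n"
  shows "pm (mm n k) (stepg n k i) (stepm n k i) \<and> vg (mm n k) (stepg n k i)"
  unfolding stepg_def stepm_def
  by (rule pm_rot) (use assms in \<open>auto simp: cpos_def mm_def\<close>)

lemma step_c:
  assumes "i < n"
  shows "bit (stepm n k i x) (cpos n k j) = bit x (cpos n k j)"
  unfolding stepm_def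
  by (rule bit_rot_c) (use assms in \<open>auto simp: cpos_def\<close>)

lemma step_reg:
  assumes "i < n"
  shows "blk (Suc k) j (stepm n k i x) = (if bit x (cpos n k i) then
     (if i \<le> j \<and> j < 2*n - 1 then blk (Suc k) (Suc j) x else if j = 2*n - 1 then blk (Suc k) i x
      else blk (Suc k) j x) else blk (Suc k) j x)"
proof -
  have e: "i + (2 * n - 1 - i) = 2*n - 1" using assms by simp
  show ?thesis unfolding stepm_def
    by (subst reg_rot) (use assms e in \<open>auto simp: cpos_def\<close>)
qed

lemma ones_Suc: "ones n k (Suc i) x = ones n k i x + (if bit x (cpos n k i) then 1 else 0)"
proof -
  have "{j. j < Suc i \<and> bit x (cpos n k j)} =
     (if bit x (cpos n k i) then insert i {j. j < i \<and> bit x (cpos n k j)} else {j. j < i \<and> bit x (cpos n k j)})"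
    by (auto simp: less_Suc_eq)
  thus ?thesis unfolding ones_def by simp
qed

lemma ones_le: "ones n k i x \<le> i"
proof -
  have "ones n k i x \<le> card {..<i}" unfolding ones_def by (rule card_mono) auto
  thus ?thesis by simp
qed

lemma ones_cong: "(\<And>j. j < i \<Longrightarrow> bit y (cpos n k j) = bit x (cpos n k j)) \<Longrightarrow> ones n k i y = ones n k i x"
  unfolding ones_def by (rule arg_cong[where f=card]) auto

lemma perm_bij: "i < N \<Longrightarrow> bij_betw (\<lambda>j. if i \<le> j \<and> j < N then Suc j else if j = N then i else j) {..<Suc N} {..<Suc N}"
  apply (rule bij_betw_byWitness[where f'="\<lambda>j. if i < j \<and> j \<le> N then j - 1 else if j = i then N else j"])
  apply (auto split: if_splits)
  done

lemma Phi_step: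
  assumes i: "i < n"
  shows "Phi n k d \<psi> (Suc i) x = Phi n k d \<psi> i (stepm n k i x)"
proof -
  let ?y = "stepm n k i x"
  let ?f = "\<lambda>j. odd (blk (Suc k) j x)"
  let ?c = "\<lambda>j. bit x (cpos n k j)"
  define ob where "ob = ones n k i x"
  have ol: "ob \<le> i" unfolding ob_def by (rule ones_le)
  have oy: "ones n k i ?y = ob" unfolding ob_def by (rule ones_cong) (simp add: step_c i)
  have cb: "\<And>j. bit ?y (cpos n k j) = ?c j" by (simp add: step_c i)
  have oS: "ones n k (Suc i) x = ob + (if ?c i then 1 else 0)" unfolding ob_def by (rule ones_Suc)
  show ?thesis
  proof (cases "?c i")
    case False
    have r: "\<And>j. blk (Suc k) j ?y = blk (Suc k) j x" using False by (simp add: step_reg i)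
    have G: "GG n k d \<psi> ?y = GG n k d \<psi> x" by (simp add: GG_def r)
    have "cinv n k i ?y = cinv n k (Suc i) x"
    proof -
      have "cinv n k i ?y \<longleftrightarrow> (\<forall>j<i. ?f j = ?c j) \<and> (\<forall>j. i \<le> j \<and> j < 2*n \<longrightarrow> ?f j = (n + ob \<le> j))"
        unfolding cinv_def r cb oy ..
      also have "\<dots> \<longleftrightarrow> (\<forall>j<Suc i. ?f j = ?c j) \<and> (\<forall>j. Suc i \<le> j \<and> j < 2*n \<longrightarrow> ?f j = (n + ob \<le> j))"
      proof
        assume A: "(\<forall>j<i. ?f j = ?c j) \<and> (\<forall>j. i \<le> j \<and> j < 2*n \<longrightarrow> ?f j = (n + ob \<le> j))"
        have "?f i = False" using A i ol by auto
        thus "(\<forall>j<Suc i. ?f j = ?c j) \<and> (\<forall>j. Suc i \<le> j \<and> j < 2*n \<longrightarrow> ?f j = (n + ob \<le> j))"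
          using A False by (auto simp: less_Suc_eq)
      next
        assume A: "(\<forall>j<Suc i. ?f j = ?c j) \<and> (\<forall>j. Suc i \<le> j \<and> j < 2*n \<longrightarrow> ?f j = (n + ob \<le> j))"
        have fi: "?f i = False" using A False by auto
        have "?f j = (n + ob \<le> j)" if "i \<le> j" "j < 2*n" for j
        proof (cases "j = i")
          case True thus ?thesis using fi i ol by auto
        next
          case False thus ?thesis using A that by auto
        qed
        thus "(\<forall>j<i. ?f j = ?c j) \<and> (\<forall>j. i \<le> j \<and> j < 2*n \<longrightarrow> ?f j = (n + ob \<le> j))"
          using A by auto
      qed
      also have "\<dots> \<longleftrightarrow> cinv n k (Suc i) x" unfolding cinv_def oS using False by simp
      finally show ?thesis .
    qed
    thus ?thesis unfolding Phi_def G by simp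
  next
    case True
    define \<pi> where "\<pi> j = (if i \<le> j \<and> j < 2*n-1 then Suc j else if j = 2*n-1 then i else j)" for j
    define \<pi>' where "\<pi>' j = (if i < j \<and> j \<le> 2*n-1 then j - 1 else if j = i then 2*n-1 else j)" for j
    have r: "\<And>j. blk (Suc k) j ?y = blk (Suc k) (\<pi> j) x" using True by (simp add: step_reg i \<pi>_def)
    have e: "Suc (2*n-1) = 2*n" "i < 2*n-1" using i by auto
    have bij: "bij_betw \<pi> {..<2*n} {..<2*n}"
      using perm_bij[OF e(2)] unfolding e(1) \<pi>_def[abs_def] .
    have G: "GG n k d \<psi> ?y = GG n k d \<psi> x"
      unfolding GG_def r using prod.reindex_bij_betw[OF bij, of "\<lambda>j. gv d \<psi> (blk (Suc k) j x)"] by simp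
    have "cinv n k i ?y = cinv n k (Suc i) x"
    proof -
      have "cinv n k i ?y \<longleftrightarrow> (\<forall>j<i. ?f j = ?c j) \<and> (\<forall>j. i \<le> j \<and> j < 2*n \<longrightarrow> ?f (\<pi> j) = (n + ob \<le> j))"
      proof -
        have pj: "\<And>j. j < i \<Longrightarrow> \<pi> j = j" using i by (simp add: \<pi>_def)
        have "cinv n k i ?y \<longleftrightarrow> (\<forall>j<i. ?f (\<pi> j) = ?c j) \<and> (\<forall>j. i \<le> j \<and> j < 2*n \<longrightarrow> ?f (\<pi> j) = (n + ob \<le> j))"
          unfolding cinv_def r cb oy ..
        moreover have "(\<forall>j<i. ?f (\<pi> j) = ?c j) \<longleftrightarrow> (\<forall>j<i. ?f j = ?c j)" using pj by auto
        ultimately show ?thesis by simp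
      qed
      also have "\<dots> \<longleftrightarrow> (\<forall>j<Suc i. ?f j = ?c j) \<and> (\<forall>j. Suc i \<le> j \<and> j < 2*n \<longrightarrow> ?f j = (n + Suc ob \<le> j))"
      proof
        assume A: "(\<forall>j<i. ?f j = ?c j) \<and> (\<forall>j. i \<le> j \<and> j < 2*n \<longrightarrow> ?f (\<pi> j) = (n + ob \<le> j))"
        have "?f (\<pi> (2*n-1)) = (n + ob \<le> 2*n-1)" using A i by auto
        hence fi: "?f i" using i ol by (auto simp: \<pi>_def)
        have "?f j = (n + Suc ob \<le> j)" if "Suc i \<le> j" "j < 2*n" for j
        proof -
          have "?f (\<pi> (j - 1)) = (n + ob \<le> j - 1)" using spec[OF conjunct2[OF A], of "j-1"] that by auto
          moreover have "\<pi> (j - 1) = j" using that by (auto simp: \<pi>_def)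
          ultimately show ?thesis using that by auto
        qed
        thus "(\<forall>j<Suc i. ?f j = ?c j) \<and> (\<forall>j. Suc i \<le> j \<and> j < 2*n \<longrightarrow> ?f j = (n + Suc ob \<le> j))"
          using A fi True by (auto simp: less_Suc_eq)
      next
        assume A: "(\<forall>j<Suc i. ?f j = ?c j) \<and> (\<forall>j. Suc i \<le> j \<and> j < 2*n \<longrightarrow> ?f j = (n + Suc ob \<le> j))"
        have fi: "?f i" using A True by auto
        have "?f (\<pi> j) = (n + ob \<le> j)" if "i \<le> j" "j < 2*n" for j
        proof (cases "j < 2*n-1")
          case True
          hence "\<pi> j = Suc j" using that by (simp add: \<pi>_def)
          thus ?thesis using A that True by auto
        next
          case False
          hence "j = 2*n-1" "\<pi> j = i" using that by (auto simp: \<pi>_def)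
          thus ?thesis using fi i ol by auto
        qed
        thus "(\<forall>j<i. ?f j = ?c j) \<and> (\<forall>j. i \<le> j \<and> j < 2*n \<longrightarrow> ?f (\<pi> j) = (n + ob \<le> j))"
          using A by auto
      qed
      also have "\<dots> \<longleftrightarrow> cinv n k (Suc i) x" unfolding cinv_def oS using True by simp
      finally show ?thesis .
    qed
    thus ?thesis unfolding Phi_def G by simp
  qed
qed


definition "convg n k i = concat (map (stepg n k) [0..<i])"

lemma conv_run:
  assumes w: "\<forall>x<2^(mm n k). w x = Phi n k d \<psi> 0 x" and i: "i \<le> n"
  shows "(\<forall>x<2^(mm n k). run (mm n k) (convg n k i) w x = Phi n k d \<psi> i x) \<and> vg (mm n k) (convg n k i)"
  using i
proof (induction i)
  case 0 thus ?case using w by (simp add: convg_def)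
next
  case (Suc i)
  have i: "i < n" using Suc.prems by simp
  have IH: "\<forall>x<2^(mm n k). run (mm n k) (convg n k i) w x = Phi n k d \<psi> i x" "vg (mm n k) (convg n k i)"
    using Suc by auto
  have st: "pm (mm n k) (stepg n k i) (stepm n k i)" "vg (mm n k) (stepg n k i)" using step_pm[OF i] by auto
  have e: "convg n k (Suc i) = convg n k i @ stepg n k i" by (simp add: convg_def)
  show ?case
  proof (intro conjI allI impI)
    fix x :: nat assume x: "x < 2^(mm n k)"
    have "run (mm n k) (convg n k (Suc i)) w x = run (mm n k) (convg n k i) w (stepm n k i x)"
      unfolding e run_append using st(1) x by (simp add: pm_def)
    also have "\<dots> = Phi n k d \<psi> i (stepm n k i x)" using IH(1) st(1) x by (simp add: pm_def)
    also have "\<dots> = Phi n k d \<psi> (Suc i) x" using Phi_step[OF i] by simp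
    finally show "run (mm n k) (convg n k (Suc i)) w x = Phi n k d \<psi> (Suc i) x" .
  next
    show "vg (mm n k) (convg n k (Suc i))" unfolding e using IH st by simp
  qed
qed

definition "dg n k i = map (\<lambda>j. (CNOTg, cpos n k j, j * Suc k)) [0..<i]"

primrec dm :: "nat \<Rightarrow> nat \<Rightarrow> nat \<Rightarrow> nat \<Rightarrow> nat" where
  "dm n k 0 x = x"
| "dm n k (Suc i) x = dm n k i (pmap (\<lambda>a b. a \<noteq> b) (\<lambda>a b. b) (cpos n k i) (i * Suc k) x)"

lemma flag_lt_cpos: "j < 2 * n \<Longrightarrow> b < Suc k \<Longrightarrow> j * Suc k + b < cpos n k i"
proof -
  assume "j < 2 * n" "b < Suc k"
  hence "j * Suc k + b < Suc j * Suc k" by simp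
  also have "\<dots> \<le> 2 * n * Suc k" using `j < 2*n` by (intro mult_le_mono1) simp
  finally show ?thesis by (simp add: cpos_def)
qed

lemma dm_pm:
  assumes "i \<le> n"
  shows "pm (mm n k) (dg n k i) (dm n k i) \<and> vg (mm n k) (dg n k i)"
  using assms
proof (induction i)
  case 0 thus ?case by (simp add: dg_def pm_Nil)
next
  case (Suc i)
  have i: "i < n" using Suc.prems by simp
  have lt: "i * Suc k < cpos n k i" using flag_lt_cpos[of i n 0 k i] i by simp
  have lt2: "cpos n k i < mm n k" using i by (simp add: cpos_def mm_def)
  have e: "dg n k (Suc i) = dg n k i @ [(CNOTg, cpos n k i, i * Suc k)]" by (simp add: dg_def)
  have "pm (mm n k) (dg n k (Suc i)) (\<lambda>x. dm n k i (pmap (\<lambda>a b. a \<noteq> b) (\<lambda>a b. b) (cpos n k i) (i * Suc k) x))"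
    unfolding e CNOTg_def using Suc lt lt2 by (intro pm_append pm_pg) auto
  moreover have "vg (mm n k) (dg n k (Suc i))" unfolding e using Suc lt lt2
    by (simp add: valid_gate_def unitary_CNOTg)
  ultimately show ?case by simp
qed

lemma bit_dm:
  assumes "i \<le> n"
  shows "bit (dm n k i x) p = (if cpos n k 0 \<le> p \<and> p < cpos n k i then bit x p \<noteq> bit x ((p - cpos n k 0) * Suc k) else bit x p)"
  using assms
proof (induction i arbitrary: x)
  case 0 thus ?case by auto
next
  case (Suc i)
  have i: "i < n" using Suc.prems by simp
  have lt: "\<And>q. q < n \<Longrightarrow> q * Suc k < cpos n k i" using flag_lt_cpos[of _ n 0 k i] by simp
  let ?y = "pmap (\<lambda>a b. a \<noteq> b) (\<lambda>a b. b) (cpos n k i) (i * Suc k) x"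
  have yb: "\<And>q. bit ?y q = (if q = cpos n k i then bit x q \<noteq> bit x (i * Suc k) else bit x q)"
    using lt[OF i] by (auto simp: pmap_def bit_sb)
  show ?case
  proof (cases "cpos n k 0 \<le> p \<and> p < cpos n k (Suc i)")
    case True
    define q where "q = p - cpos n k 0"
    have pe: "p = cpos n k 0 + q" "cpos n k i = cpos n k 0 + i" "cpos n k (Suc i) = cpos n k 0 + Suc i"
      using True by (auto simp: q_def cpos_def)
    have q: "q < Suc i" using True pe by linarith
    have qn: "q * Suc k < cpos n k i" using lt q i by simp
    show ?thesis
    proof (cases "q = i")
      case True
      hence "p = cpos n k i" "\<not> p < cpos n k i" using pe by auto
      thus ?thesis unfolding dm.simps Suc.IH[OF Suc_leD[OF Suc.prems]] yb using `q = i` pe(2,3) by (simp add: q_def)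
    next
      case False
      hence "p < cpos n k i" "p \<noteq> cpos n k i" "cpos n k 0 \<le> p" using pe q by auto
      thus ?thesis unfolding dm.simps Suc.IH[OF Suc_leD[OF Suc.prems]] yb using qn True q_def by auto
    qed
  next
    case False
    have "cpos n k 0 \<le> cpos n k i" "cpos n k i < cpos n k (Suc i)" by (simp_all add: cpos_def)
    hence "\<not> (cpos n k 0 \<le> p \<and> p < cpos n k i)" "p \<noteq> cpos n k i" using False by auto
    thus ?thesis unfolding dm.simps Suc.IH[OF Suc_leD[OF Suc.prems]] yb using False by (simp only: if_False simp_thms)
  qed
qed


definition fin :: "nat \<Rightarrow> nat \<Rightarrow> nat \<Rightarrow> bool" where
  "fin n k x \<longleftrightarrow> (\<forall>j<n. \<not> bit x (cpos n k j)) \<and>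
     (\<forall>j. n \<le> j \<and> j < 2*n \<longrightarrow> odd (blk (Suc k) j x) = (n + card {j. j < n \<and> odd (blk (Suc k) j x)} \<le> j))"

definition Psi :: "nat \<Rightarrow> nat \<Rightarrow> nat \<Rightarrow> (nat \<Rightarrow> complex) \<Rightarrow> nat \<Rightarrow> complex" where
  "Psi n k d \<psi> x = h2 ^ n * GG n k d \<psi> x * of_bool (fin n k x)"

lemma odd_blk: "odd (blk (Suc k) j x) = bit x (j * Suc k)"
  using bit_blk[of "Suc k" j x 0] by (simp add: bit_0)

lemma Phi_dm: "Phi n k d \<psi> n (dm n k n x) = Psi n k d \<psi> x"
proof -
  have r: "blk (Suc k) j (dm n k n x) = blk (Suc k) j x" if j: "j < 2*n" for j
  proof (rule bit_eqI)
    fix b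
    show "bit (blk (Suc k) j (dm n k n x)) b = bit (blk (Suc k) j x) b"
      using flag_lt_cpos[OF j, of b k 0] by (auto simp: bit_blk bit_dm)
  qed
  have c: "bit (dm n k n x) (cpos n k j) = (bit x (cpos n k j) \<noteq> odd (blk (Suc k) j x))" if j: "j < n" for j
    using j by (simp add: bit_dm odd_blk cpos_def)
  have G: "GG n k d \<psi> (dm n k n x) = GG n k d \<psi> x" unfolding GG_def by (simp add: r)
  have "cinv n k n (dm n k n x) = fin n k x"
  proof
    assume A: "cinv n k n (dm n k n x)"
    have nc: "\<forall>j<n. \<not> bit x (cpos n k j)" using A unfolding cinv_def by (auto simp: r c)
    have "ones n k n (dm n k n x) = card {j. j < n \<and> odd (blk (Suc k) j x)}"
      unfolding ones_def using nc by (intro arg_cong[where f=card]) (auto simp: c)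
    thus "fin n k x" using A nc unfolding cinv_def fin_def by (auto simp: r)
  next
    assume A: "fin n k x"
    have nc: "\<forall>j<n. \<not> bit x (cpos n k j)" using A unfolding fin_def by auto
    have "ones n k n (dm n k n x) = card {j. j < n \<and> odd (blk (Suc k) j x)}"
      unfolding ones_def using nc by (intro arg_cong[where f=card]) (auto simp: c)
    thus "cinv n k n (dm n k n x)" using A nc unfolding cinv_def fin_def by (auto simp: r c)
  qed
  thus ?thesis unfolding Phi_def Psi_def G by simp
qed


definition "swm a b x = pmap (\<lambda>p q. q) (\<lambda>p q. p) a b x"

lemma bit_swm: "a \<noteq> b \<Longrightarrow> bit (swm a b x) r = (if r = a then bit x b else if r = b then bit x a else bit x r)"
  by (auto simp: swm_def pmap_def bit_sb)

primrec bswg :: "nat \<Rightarrow> nat \<Rightarrow> nat \<Rightarrow> gate list" where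
  "bswg P Q 0 = []"
| "bswg P Q (Suc t) = (SWAPg, P + t, Q + t) # bswg P Q t"

primrec bsw :: "nat \<Rightarrow> nat \<Rightarrow> nat \<Rightarrow> nat \<Rightarrow> nat" where
  "bsw P Q 0 x = x"
| "bsw P Q (Suc t) x = swm (P + t) (Q + t) (bsw P Q t x)"

lemma pm_bsw:
  assumes "P + L \<le> Q" "Q + L \<le> m"
  shows "pm m (bswg P Q L) (bsw P Q L) \<and> vg m (bswg P Q L)"
  using assms
proof (induction L)
  case 0 thus ?case by (simp add: pm_Nil)
next
  case (Suc L)
  have "pm m ([(SWAPg, P + L, Q + L)] @ bswg P Q L) (\<lambda>x. swm (P + L) (Q + L) (bsw P Q L x))"
    unfolding SWAPg_def swm_def using Suc by (intro pm_append pm_pg) auto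
  moreover have "valid_gate m (SWAPg, P + L, Q + L)" using Suc.prems
    by (simp add: valid_gate_def unitary_SWAPg)
  ultimately show ?case using Suc by simp
qed

lemma bit_bsw:
  assumes "P + L \<le> Q"
  shows "bit (bsw P Q L x) r = (if P \<le> r \<and> r < P + L then bit x (r - P + Q)
           else if Q \<le> r \<and> r < Q + L then bit x (r - Q + P) else bit x r)"
  using assms
proof (induction L arbitrary: r)
  case 0 thus ?case by auto
next
  case (Suc L)
  have ne: "P + L \<noteq> Q + L" using Suc.prems by simp
  show ?case unfolding bsw.simps bit_swm[OF ne] using Suc by (auto simp: add.commute)
qed

lemma bsw_out: "P + L \<le> Q \<Longrightarrow> \<not> (P \<le> t \<and> t < P + L) \<Longrightarrow> \<not> (Q \<le> t \<and> t < Q + L) \<Longrightarrow> bit (bsw P Q L x) t = bit x t"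
  by (auto simp: bit_bsw)
lemma bsw_src: "P + L \<le> Q \<Longrightarrow> t = P + b \<Longrightarrow> b < L \<Longrightarrow> bit (bsw P Q L x) t = bit x (Q + b)"
  by (simp add: bit_bsw add.commute)
lemma bsw_tgt: "P + L \<le> Q \<Longrightarrow> t = Q + b \<Longrightarrow> b < L \<Longrightarrow> bit (bsw P Q L x) t = bit x (P + b)"
  by (simp add: bit_bsw add.commute)

definition "ag n k i = concat (map (\<lambda>i'. bswg (i' * k) ((n + i') * Suc k + 1) k) [0..<i])"

primrec am :: "nat \<Rightarrow> nat \<Rightarrow> nat \<Rightarrow> nat \<Rightarrow> nat" where
  "am n k 0 x = x"
| "am n k (Suc i) x = am n k i (bsw (i * k) ((n + i) * Suc k + 1) k x)"

lemma blockA_le: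
  assumes "i < n"
  shows "i * k + k \<le> (n + i) * Suc k + 1" "(n + i) * Suc k + 1 + k \<le> mm n k"
proof -
  have "i * k + k = Suc i * k" by simp
  also have "\<dots> \<le> (n + i) * k" using assms by (intro mult_le_mono1) simp
  also have "\<dots> \<le> (n + i) * Suc k + 1" by simp
  finally show "i * k + k \<le> (n + i) * Suc k + 1" .
  have "(n + i) * Suc k + 1 + k = Suc (n + i) * Suc k" by simp
  also have "\<dots> \<le> 2 * n * Suc k" using assms by (intro mult_le_mono1) simp
  also have "\<dots> \<le> mm n k" by (simp add: mm_def)
  finally show "(n + i) * Suc k + 1 + k \<le> mm n k" .
qed

lemma pm_am:
  assumes "i \<le> n"
  shows "pm (mm n k) (ag n k i) (am n k i) \<and> vg (mm n k) (ag n k i)"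
  using assms
proof (induction i)
  case 0 thus ?case by (simp add: ag_def pm_Nil)
next
  case (Suc i)
  have i: "i < n" using Suc.prems by simp
  have e: "ag n k (Suc i) = ag n k i @ bswg (i * k) ((n + i) * Suc k + 1) k" by (simp add: ag_def)
  note b = pm_bsw[OF blockA_le[OF i]]
  show ?case unfolding e using pm_append[OF conjunct1[OF Suc.IH] conjunct1[OF b]] Suc.IH b Suc.prems by simp
qed

lemma lt_nk: "(i'::nat) < i \<Longrightarrow> b < k \<Longrightarrow> i' * k + b < i * k"
proof -
  assume a: "i' < i" "b < k"
  have "i' * k + b < Suc i' * k" using a by simp
  also have "\<dots> \<le> i * k" using a by (intro mult_le_mono1) simp
  finally show ?thesis .
qed

lemma tgt_lt: "(i'::nat) < i \<Longrightarrow> (b::nat) < k \<Longrightarrow> (n + i') * Suc k + Suc b < (n + i) * Suc k"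
proof -
  assume a: "i' < i" "b < k"
  have "(n + i') * Suc k + Suc b < Suc (n + i') * Suc k" using a by simp
  also have "\<dots> \<le> (n + i) * Suc k" using a by (intro mult_le_mono1) simp
  finally show ?thesis .
qed

lemma nk_le: "(i::nat) \<le> n \<Longrightarrow> i * k \<le> n * Suc k"
  by (metis le_SucI mult_le_mono order.refl)

lemma tgt_ge: "n * Suc k < (n + i) * Suc k + Suc (b::nat)"
proof -
  have "n * Suc k \<le> (n + i) * Suc k" by (intro mult_le_mono1) simp
  thus ?thesis by simp
qed

lemma bit_am:
  assumes "i \<le> n"
  shows "(\<forall>i'<i. \<forall>b<k. bit (am n k i x) (i' * k + b) = bit x ((n + i') * Suc k + Suc b)) \<and>
         (\<forall>i'<i. \<forall>b<k. bit (am n k i x) ((n + i') * Suc k + Suc b) = bit x (i' * k + b)) \<and>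
         (\<forall>r. i * k \<le> r \<longrightarrow> (\<forall>i'<i. \<forall>b<k. r \<noteq> (n + i') * Suc k + Suc b) \<longrightarrow> bit (am n k i x) r = bit x r)"
  using assms
proof (induction i arbitrary: x)
  case 0 thus ?case by simp
next
  case (Suc i)
  have i: "i < n" using Suc.prems by simp
  define P where "P = i * k"
  define Q where "Q = (n + i) * Suc k + 1"
  let ?B = "bsw P Q k x"
  have PQ: "P + k \<le> Q" unfolding P_def Q_def by (rule blockA_le(1)[OF i])
  have IH: "\<forall>i'<i. \<forall>b<k. bit (am n k i ?B) (i' * k + b) = bit ?B ((n + i') * Suc k + Suc b)"
       "\<forall>i'<i. \<forall>b<k. bit (am n k i ?B) ((n + i') * Suc k + Suc b) = bit ?B (i' * k + b)"
       "\<forall>r. i * k \<le> r \<longrightarrow> (\<forall>i'<i. \<forall>b<k. r \<noteq> (n + i') * Suc k + Suc b) \<longrightarrow> bit (am n k i ?B) r = bit ?B r"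
    using Suc.IH[OF Suc_leD[OF Suc.prems], of ?B] by auto
  have amS: "am n k (Suc i) x = am n k i ?B" by (simp add: P_def Q_def)
  have nk: "Suc i * k \<le> n * Suc k" using nk_le[of "Suc i" n k] Suc.prems by simp
  have tQ: "(n + i') * Suc k + Suc b < Q" if "i' < i" "b < k" for i' b
    using tgt_lt[OF that, of n] unfolding Q_def by simp
  have tP: "P + k < (n + i') * Suc k + Suc b" for i' b
    using tgt_ge[of n k i' b] nk unfolding P_def by simp
  show ?case unfolding amS
  proof (intro conjI allI impI)
    fix i' b assume i': "i' < Suc i" and b: "b < k"
    show "bit (am n k i ?B) (i' * k + b) = bit x ((n + i') * Suc k + Suc b)"
    proof (cases "i' < i")
      case True
      have "i' * k + b < P" unfolding P_def using lt_nk[OF True b] .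
      hence "bit ?B ((n + i') * Suc k + Suc b) = bit x ((n + i') * Suc k + Suc b)"
        using tQ[OF True b] tP[of i' b] by (intro bsw_out[OF PQ]) auto
      thus ?thesis using IH(1) True b by simp
    next
      case False
      hence ii: "i' = i" using i' by simp
      have "i * k + b \<noteq> (n + i'') * Suc k + Suc b'" for i'' b'
        using tP[of i'' b'] b unfolding P_def by simp
      hence "bit (am n k i ?B) (i * k + b) = bit ?B (i * k + b)" using IH(3) by simp
      also have "\<dots> = bit x (Q + b)" by (rule bsw_src[OF PQ _ b]) (simp add: P_def)
      finally show ?thesis using ii by (simp add: Q_def)
    qed
  next
    fix i' b assume i': "i' < Suc i" and b: "b < k"
    show "bit (am n k i ?B) ((n + i') * Suc k + Suc b) = bit x (i' * k + b)"
    proof (cases "i' < i")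
      case True
      have "i' * k + b < P" unfolding P_def using lt_nk[OF True b] .
      hence "bit ?B (i' * k + b) = bit x (i' * k + b)"
        using PQ by (intro bsw_out[OF PQ]) auto
      thus ?thesis using IH(2) True b by simp
    next
      case False
      hence ii: "i' = i" using i' by simp
      have ge: "i * k \<le> (n + i) * Suc k + Suc b" using tP[of i b] unfolding P_def by simp
      have "(n + i) * Suc k + Suc b \<noteq> (n + i'') * Suc k + Suc b'" if "i'' < i" "b' < k" for i'' b'
        using tQ[OF that] unfolding Q_def by simp
      hence "bit (am n k i ?B) ((n + i) * Suc k + Suc b) = bit ?B ((n + i) * Suc k + Suc b)"
        using IH(3) ge by simp
      also have "\<dots> = bit x (P + b)" by (rule bsw_tgt[OF PQ _ b]) (simp add: Q_def)
      finally show ?thesis using ii by (simp add: P_def)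
    qed
  next
    fix r assume r1: "Suc i * k \<le> r" and r2: "\<forall>i'<Suc i. \<forall>b<k. r \<noteq> (n + i') * Suc k + Suc b"
    have "bit (am n k i ?B) r = bit ?B r" using IH(3) r1 r2 by simp
    also have "\<dots> = bit x r"
    proof (rule bsw_out[OF PQ])
      show "\<not> (P \<le> r \<and> r < P + k)" using r1 unfolding P_def by simp
      show "\<not> (Q \<le> r \<and> r < Q + k)"
      proof
        assume h: "Q \<le> r \<and> r < Q + k"
        hence "r = (n + i) * Suc k + Suc (r - Q)" "r - Q < k" unfolding Q_def by auto
        thus False using r2 by blast
      qed
    qed
    finally show "bit (am n k i ?B) r = bit x r" .
  qed
qed


definition "xg n k i = map (\<lambda>i'. (Xg, (n + i') * Suc k, cpos n k 0)) [0..<i]"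

primrec xm :: "nat \<Rightarrow> nat \<Rightarrow> nat \<Rightarrow> nat \<Rightarrow> nat" where
  "xm n k 0 x = x"
| "xm n k (Suc i) x = xm n k i (pmap (\<lambda>p q. \<not> p) (\<lambda>p q. q) ((n + i) * Suc k) (cpos n k 0) x)"

lemma flag_lt: "i < n \<Longrightarrow> (n + i) * Suc k < cpos n k 0"
proof -
  assume i: "i < n"
  have "(n + i) * Suc k < Suc (n + i) * Suc k" by simp
  also have "\<dots> \<le> 2 * n * Suc k" using i by (intro mult_le_mono1) simp
  finally show ?thesis by (simp add: cpos_def)
qed

lemma pm_xm:
  assumes "i \<le> n"
  shows "pm (mm n k) (xg n k i) (xm n k i) \<and> vg (mm n k) (xg n k i)"
  using assms
proof (induction i)
  case 0 thus ?case by (simp add: xg_def pm_Nil)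
next
  case (Suc i)
  have i: "i < n" using Suc.prems by simp
  have lt: "(n + i) * Suc k < cpos n k 0" "cpos n k 0 < mm n k" using flag_lt[OF i] i by (auto simp: cpos_def mm_def)
  have e: "xg n k (Suc i) = xg n k i @ [(Xg, (n + i) * Suc k, cpos n k 0)]" by (simp add: xg_def)
  have "pm (mm n k) (xg n k (Suc i)) (\<lambda>x. xm n k i (pmap (\<lambda>p q. \<not> p) (\<lambda>p q. q) ((n + i) * Suc k) (cpos n k 0) x))"
    unfolding e Xg_def using Suc lt by (intro pm_append pm_pg) auto
  moreover have "vg (mm n k) (xg n k (Suc i))" unfolding e using Suc lt
    by (simp add: valid_gate_def unitary_Xg)
  ultimately show ?case by simp
qed

lemma bit_xm:
  assumes "i \<le> n"
  shows "bit (xm n k i x) r = (if \<exists>i'<i. r = (n + i') * Suc k then \<not> bit x r else bit x r)"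
  using assms
proof (induction i arbitrary: x)
  case 0 thus ?case by simp
next
  case (Suc i)
  have i: "i < n" using Suc.prems by simp
  have ne: "(n + i) * Suc k \<noteq> cpos n k 0" using flag_lt[OF i, of k] by simp
  let ?X = "pmap (\<lambda>p q. \<not> p) (\<lambda>p q. q) ((n + i) * Suc k) (cpos n k 0) x"
  have bX: "bit ?X r = (if r = (n + i) * Suc k then \<not> bit x r else bit x r)" for r
    using ne by (auto simp: pmap_def bit_sb)
  have e: "(\<exists>i'<Suc i. r = (n + i') * Suc k) = ((\<exists>i'<i. r = (n + i') * Suc k) \<or> r = (n + i) * Suc k)"
    by (auto simp: less_Suc_eq)
  have d: "(n + i') * Suc k \<noteq> (n + i) * Suc k" if "i' < i" for i' using that by (subst mult_cancel2) simp
  show ?case unfolding xm.simps Suc.IH[OF Suc_leD[OF Suc.prems]] bX e using d by auto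
qed

definition "hg n k i = map (\<lambda>j. (Uh, cpos n k j, 0)) [0..<i]"

primrec cl :: "nat \<Rightarrow> nat \<Rightarrow> nat \<Rightarrow> nat \<Rightarrow> nat" where
  "cl n k 0 x = x"
| "cl n k (Suc i) x = sb (cpos n k i) False (cl n k i x)"

lemma bit_cl: "bit (cl n k i x) p = (bit x p \<and> \<not> (cpos n k 0 \<le> p \<and> p < cpos n k i))"
  by (induction i) (auto simp: bit_sb cpos_def)

definition v0 :: "nat \<Rightarrow> nat \<Rightarrow> nat \<Rightarrow> (nat \<Rightarrow> complex) \<Rightarrow> nat \<Rightarrow> complex" where
  "v0 n k d \<psi> x = (if x < 2 ^ (n * k) then (\<Prod>i<n. ext_vec d \<psi> (blk k i x)) else 0)"

lemma nk_le_cpos: "n * k \<le> cpos n k j"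
proof -
  have "n * k \<le> 2 * n * Suc k" by (metis le_add1 mult.assoc mult_2 mult_le_mono2 trans_le_add1 le_SucI order.refl mult_le_mono)
  thus ?thesis by (simp add: cpos_def)
qed

lemma H_run:
  assumes n: "1 \<le> n" and i: "i \<le> n"
  shows "(\<forall>x<2^(mm n k). run (mm n k) (hg n k i) (v0 n k d \<psi>) x = h2 ^ i * v0 n k d \<psi> (cl n k i x)) \<and> vg (mm n k) (hg n k i)"
  using i
proof (induction i)
  case 0 thus ?case by (simp add: hg_def)
next
  case (Suc i)
  have i: "i < n" using Suc.prems by simp
  let ?c = "cpos n k i"
  have c: "?c < mm n k" "0 < mm n k" "?c \<noteq> 0" using i n by (auto simp: cpos_def mm_def)
  have e: "hg n k (Suc i) = hg n k i @ [(Uh, ?c, 0)]" by (simp add: hg_def)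
  have IH: "\<forall>x<2^(mm n k). run (mm n k) (hg n k i) (v0 n k d \<psi>) x = h2 ^ i * v0 n k d \<psi> (cl n k i x)"
    "vg (mm n k) (hg n k i)" using Suc by auto
  show ?case
  proof (intro conjI allI impI)
    fix x :: nat assume x: "x < 2^(mm n k)"
    have s: "sb ?c p x < 2^(mm n k)" for p using sb_less[OF x c(1)] .
    have z: "v0 n k d \<psi> (cl n k i (sb ?c True x)) = 0"
    proof -
      have "bit (cl n k i (sb ?c True x)) ?c" by (simp add: bit_cl bit_sb cpos_def)
      hence "\<not> cl n k i (sb ?c True x) < 2 ^ (n * k)" using nk_le_cpos[of n k i] by (auto simp: less_pow2_iff)
      thus ?thesis by (simp add: v0_def)
    qed
    have cf: "cl n k i (sb ?c False x) = cl n k (Suc i) x"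
      by (rule bit_eqI) (auto simp: bit_cl bit_sb cpos_def)
    have "run (mm n k) (hg n k (Suc i)) (v0 n k d \<psi>) x = gapp (mm n k) (Uh, ?c, 0) (run (mm n k) (hg n k i) (v0 n k d \<psi>)) x"
      unfolding e run_append by simp
    also have "\<dots> = h2 * (h2 ^ i * v0 n k d \<psi> (cl n k (Suc i) x))"
      unfolding gapp_Uh[OF x c] using IH(1) s z cf by simp
    finally show "run (mm n k) (hg n k (Suc i)) (v0 n k d \<psi>) x = h2 ^ Suc i * v0 n k d \<psi> (cl n k (Suc i) x)" by simp
  next
    show "vg (mm n k) (hg n k (Suc i))" unfolding e using IH c by (simp add: valid_gate_def unitary_Uh)
  qed
qed


lemma tgt_not_flag: "b < k \<Longrightarrow> (n + i) * Suc k + Suc b \<noteq> (n + i') * Suc k"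
proof
  assume b: "b < k" and e: "(n + i) * Suc k + Suc b = (n + i') * Suc k"
  have "((n + i) * Suc k + Suc b) mod Suc k = Suc b" using b by (intro pos_mod) simp
  moreover have "((n + i') * Suc k) mod Suc k = 0" by (rule mod_mult_self2_is_0)
  ultimately show False using e by (metis Zero_not_Suc)
qed

lemma flag_ge: "n * Suc k \<le> (n + i) * Suc k"
  by (intro mult_le_mono1) simp

lemma tgt_lt_cpos: "i < n \<Longrightarrow> b < k \<Longrightarrow> (n + i) * Suc k + Suc b < cpos n k 0"
proof -
  assume i: "i < n" and b: "b < k"
  have "(n + i) * Suc k + Suc b < Suc (n + i) * Suc k" using b by simp
  also have "\<dots> \<le> 2 * n * Suc k" using i by (intro mult_le_mono1) simp
  finally show ?thesis by (simp add: cpos_def)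
qed

lemma nk_le_nSk: "n * k \<le> n * Suc k" by simp

context
  fixes n k x :: nat
  assumes n1: "1 \<le> n"
begin

definition "yy = am n k n (xm n k n x)"

lemma F1: "i < n \<Longrightarrow> b < k \<Longrightarrow> bit yy (i * k + b) = bit x ((n + i) * Suc k + Suc b)"
proof -
  assume i: "i < n" and b: "b < k"
  have a: "bit yy (i * k + b) = bit (xm n k n x) ((n + i) * Suc k + Suc b)"
    unfolding yy_def using bit_am[of n n k "xm n k n x"] i b by blast
  have nf: "\<not> (\<exists>i'<n. (n + i) * Suc k + Suc b = (n + i') * Suc k)" using tgt_not_flag[OF b] by blast
  show ?thesis unfolding a bit_xm[OF order.refl] if_not_P[OF nf] ..
qed

lemma F2: "i < n \<Longrightarrow> b < k \<Longrightarrow> bit yy ((n + i) * Suc k + Suc b) = bit x (i * k + b)"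
proof -
  assume i: "i < n" and b: "b < k"
  have "i * k + b < n * k" using lt_nk[OF i b] .
  hence nf: "\<not> (\<exists>i'<n. i * k + b = (n + i') * Suc k)" using flag_ge[of n k] nk_le_nSk[of n k]
    by (metis leD le_trans)
  have a: "bit yy ((n + i) * Suc k + Suc b) = bit (xm n k n x) (i * k + b)"
    unfolding yy_def using bit_am[of n n k "xm n k n x"] i b by blast
  show ?thesis unfolding a bit_xm[OF order.refl] if_not_P[OF nf] ..
qed

lemma F3: "n * k \<le> r \<Longrightarrow> (\<forall>i<n. \<forall>b<k. r \<noteq> (n + i) * Suc k + Suc b) \<Longrightarrow>
    bit yy r = (if \<exists>i'<n. r = (n + i') * Suc k then \<not> bit x r else bit x r)"
proof -
  assume r: "n * k \<le> r" "\<forall>i<n. \<forall>b<k. r \<noteq> (n + i) * Suc k + Suc b"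
  have a: "bit yy r = bit (xm n k n x) r"
    unfolding yy_def using conjunct2[OF conjunct2[OF bit_am[of n n k "xm n k n x"]]] r by blast
  show ?thesis unfolding a bit_xm[OF order.refl] ..
qed

lemma L1: "i < n \<Longrightarrow> blk k i (cl n k n yy) = blk (Suc k) (n + i) x div 2"
proof (rule bit_eqI)
  fix b assume i: "i < n"
  show "bit (blk k i (cl n k n yy)) b = bit (blk (Suc k) (n + i) x div 2) b"
  proof (cases "b < k")
    case True
    have "i * k + b < n * k" using lt_nk[OF i True] .
    hence "i * k + b < cpos n k 0" using nk_le_cpos[of n k 0] by simp
    thus ?thesis using True i by (simp add: bit_blk bit_cl F1 flip: bit_Suc)
  next
    case False thus ?thesis by (simp add: bit_blk flip: bit_Suc)
  qed
qed

lemma L2: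
  assumes x: "x < 2 ^ mm n k"
  shows "(cl n k n yy < 2 ^ (n * k)) \<longleftrightarrow> (\<forall>q < n * Suc k. \<not> bit x q) \<and> (\<forall>i<n. bit x ((n + i) * Suc k))"
proof
  assume "cl n k n yy < 2 ^ (n * k)"
  hence A: "\<And>p. n * k \<le> p \<Longrightarrow> p < cpos n k 0 \<Longrightarrow> \<not> bit yy p"
    by (auto simp: less_pow2_iff bit_cl)
  have "\<not> bit x q" if q: "q < n * Suc k" for q
  proof (cases "q < n * k")
    case True
    hence k: "0 < k" by (cases k) auto
    define i where "i = q div k"
    define b where "b = q mod k"
    have qe: "q = i * k + b" by (simp add: i_def b_def)
    have i: "i < n" unfolding i_def using True by (simp add: less_mult_imp_div_less)
    have b: "b < k" unfolding b_def using k by simp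
    have "n * k \<le> (n + i) * Suc k + Suc b" using tgt_ge[of n k i b] by simp
    hence "\<not> bit yy ((n + i) * Suc k + Suc b)" using A tgt_lt_cpos[OF i b] by simp
    thus ?thesis using F2[OF i b] qe by simp
  next
    case False
    have nt: "\<forall>i<n. \<forall>b<k. q \<noteq> (n + i) * Suc k + Suc b" using tgt_ge[of n k] q by (metis less_asym)
    have nf: "\<not> (\<exists>i'<n. q = (n + i') * Suc k)" using flag_ge[of n k] q by (metis leD)
    have "q < cpos n k 0" using q by (simp add: cpos_def)
    hence nb: "\<not> bit yy q" using A False by simp
    have ge: "n * k \<le> q" using False by simp
    have "bit yy q = bit x q" using F3[OF ge nt] unfolding if_not_P[OF nf] .
    thus ?thesis using nb by simp
  qed
  moreover have "bit x ((n + i) * Suc k)" if i: "i < n" for i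
  proof -
    have nt: "\<forall>i'<n. \<forall>b<k. (n + i) * Suc k \<noteq> (n + i') * Suc k + Suc b" using tgt_not_flag by metis
    have ge: "n * k \<le> (n + i) * Suc k" using flag_ge[of n k i] by simp
    have "\<not> bit yy ((n + i) * Suc k)" using A ge flag_lt[OF i] by simp
    moreover have ex: "\<exists>i'<n. (n + i) * Suc k = (n + i') * Suc k" using i by blast
    ultimately show ?thesis using F3[OF ge nt] unfolding if_P[OF ex] by simp
  qed
  ultimately show "(\<forall>q < n * Suc k. \<not> bit x q) \<and> (\<forall>i<n. bit x ((n + i) * Suc k))" by blast
next
  assume B: "(\<forall>q < n * Suc k. \<not> bit x q) \<and> (\<forall>i<n. bit x ((n + i) * Suc k))"
  have "\<not> bit (cl n k n yy) p" if p: "n * k \<le> p" for p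
  proof (cases "cpos n k 0 \<le> p \<and> p < cpos n k n")
    case True thus ?thesis by (simp add: bit_cl)
  next
    case pc: False
    show ?thesis
    proof (cases "\<exists>i<n. \<exists>b<k. p = (n + i) * Suc k + Suc b")
      case True
      then obtain i b where i: "i < n" and b: "b < k" and pe: "p = (n + i) * Suc k + Suc b" by blast
      have "i * k + b < n * Suc k" using lt_nk[OF i b] nk_le_nSk[of n k] by simp
      thus ?thesis using B F2[OF i b] pe by (simp add: bit_cl)
    next
      case nt: False
      show ?thesis
      proof (cases "\<exists>i'<n. p = (n + i') * Suc k")
        case ex: True
        have nt': "\<forall>i<n. \<forall>b<k. p \<noteq> (n + i) * Suc k + Suc b" using nt by blast
        have "bit x p" using ex B by auto
        hence "\<not> bit yy p" using F3[OF p nt'] unfolding if_P[OF ex] by simp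
        thus ?thesis by (simp add: bit_cl)
      next
        case nf: False
        have "\<not> bit x p"
        proof (cases "p < n * Suc k")
          case True thus ?thesis using B by simp
        next
          case False
          show ?thesis
          proof (cases "p < cpos n k 0")
            case True
            define i where "i = p div Suc k - n"
            define s where "s = p mod Suc k"
            have pd: "n \<le> p div Suc k" using False by (metis div_ge not_less order.strict_implies_order
                  less_or_eq_imp_le linorder_not_less)
            have pe: "p = (n + i) * Suc k + s" using pd div_mult_mod_eq[of p "Suc k"] by (simp add: i_def s_def)
            have "p div Suc k < 2 * n" using True by (simp add: cpos_def less_mult_imp_div_less)
            hence i: "i < n" using pd by (simp add: i_def)
            show ?thesis
            proof (cases s)
              case 0 thus ?thesis using nf pe i by auto
            next
              case (Suc b)
              have "b < k" using Suc mod_less_divisor[of "Suc k" p] by (simp add: s_def)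
              thus ?thesis using nt pe i Suc by auto
            qed
          next
            case False
            hence "mm n k \<le> p" using pc by (simp add: cpos_def mm_def)
            thus ?thesis using x by (auto simp: less_pow2_iff)
          qed
        qed
        moreover have nt': "\<forall>i<n. \<forall>b<k. p \<noteq> (n + i) * Suc k + Suc b" using nt by blast
        ultimately have "\<not> bit yy p" using F3[OF p nt'] unfolding if_not_P[OF nf] by simp
        thus ?thesis by (simp add: bit_cl)
      qed
    qed
  qed
  thus "cl n k n yy < 2 ^ (n * k)" by (simp add: less_pow2_iff)
qed


lemma L3:
  assumes x: "x < 2 ^ mm n k"
  shows "Phi n k d \<psi> 0 x = h2 ^ n * v0 n k d \<psi> (cl n k n yy)"
proof -
  have C1: "(\<forall>q < n * Suc k. \<not> bit x q) \<longleftrightarrow> (\<forall>j<n. blk (Suc k) j x = 0)"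
  proof
    assume A: "\<forall>q < n * Suc k. \<not> bit x q"
    show "\<forall>j<n. blk (Suc k) j x = 0"
    proof (intro allI impI)
      fix j assume j: "j < n"
      show "blk (Suc k) j x = 0"
      proof (rule bit_eqI)
        fix b
        have "b < Suc k \<Longrightarrow> j * Suc k + b < n * Suc k"
        proof -
          assume b: "b < Suc k"
          have "j * Suc k + b < Suc j * Suc k" using b by simp
          also have "\<dots> \<le> n * Suc k" using j by (intro mult_le_mono1) simp
          finally show ?thesis .
        qed
        thus "bit (blk (Suc k) j x) b = bit (0::nat) b" using A by (auto simp: bit_blk)
      qed
    qed
  next
    assume A: "\<forall>j<n. blk (Suc k) j x = 0"
    show "\<forall>q < n * Suc k. \<not> bit x q"
    proof (intro allI impI)
      fix q assume q: "q < n * Suc k"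
      have "q div Suc k < n" using q by (simp add: less_mult_imp_div_less)
      hence "blk (Suc k) (q div Suc k) x = 0" using A by simp
      moreover have "bit x q = bit (blk (Suc k) (q div Suc k) x) (q mod Suc k)"
        using div_mult_mod_eq[of q "Suc k"] by (simp add: bit_blk)
      ultimately show "\<not> bit x q" by simp
    qed
  qed
  have C2: "(\<forall>i<n. bit x ((n + i) * Suc k)) \<longleftrightarrow> (\<forall>i<n. odd (blk (Suc k) (n + i) x))"
    by (simp add: odd_blk)
  have inv0: "cinv n k 0 x \<longleftrightarrow> (\<forall>j<2*n. odd (blk (Suc k) j x) = (n \<le> j))"
    by (auto simp: cinv_def ones_def)
  have split: "(\<Prod>j<2*n. f j) = (\<Prod>j<n. f j) * (\<Prod>i<n. f (n + i))" for f :: "nat \<Rightarrow> complex"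
  proof -
    have "(\<Prod>j<n + m. f j) = (\<Prod>j<n. f j) * (\<Prod>i<m. f (n + i))" for m
      by (induction m) (simp_all add: mult.assoc)
    from this[of n] show ?thesis by (simp add: mult_2)
  qed
  define C where "C = ((\<forall>j<n. blk (Suc k) j x = 0) \<and> (\<forall>i<n. odd (blk (Suc k) (n + i) x)))"
  have v: "v0 n k d \<psi> (cl n k n yy) = of_bool C * (\<Prod>i<n. ext_vec d \<psi> (blk (Suc k) (n + i) x div 2))"
    unfolding v0_def L2[OF x] C1 C2 C_def using L1 by simp
  show ?thesis
  proof (cases C)
    case True
    have "cinv n k 0 x" unfolding inv0
    proof (intro allI impI)
      fix j assume j: "j < 2*n"
      show "odd (blk (Suc k) j x) = (n \<le> j)"
      proof (cases "j < n")
        case True thus ?thesis using `C` by (simp add: C_def)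
      next
        case False
        hence "j = n + (j - n)" "j - n < n" using j by auto
        hence "odd (blk (Suc k) j x)" using `C` unfolding C_def by metis
        thus ?thesis using False by simp
      qed
    qed
    moreover have "GG n k d \<psi> x = (\<Prod>i<n. ext_vec d \<psi> (blk (Suc k) (n + i) x div 2))"
      unfolding GG_def split using True by (simp add: C_def gv_def)
    ultimately show ?thesis unfolding Phi_def v using True by simp
  next
    case False
    have "GG n k d \<psi> x = 0" if I: "cinv n k 0 x"
    proof -
      have "\<forall>i<n. odd (blk (Suc k) (n + i) x)" using I unfolding inv0 by simp
      then obtain j where j: "j < n" "blk (Suc k) j x \<noteq> 0" using False unfolding C_def by blast
      have j2: "j < 2 * n" using j by simp
      have "odd (blk (Suc k) j x) = (n \<le> j)" using I j2 unfolding inv0 by blast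
      hence "even (blk (Suc k) j x)" using j(1) by simp
      hence "gv d \<psi> (blk (Suc k) j x) = 0" using j by (simp add: gv_def)
      thus ?thesis unfolding GG_def using j by (intro prod_zero) auto
    qed
    thus ?thesis unfolding Phi_def v using False by auto
  qed
qed

end


definition "fullg n k = hg n k n @ ag n k n @ xg n k n @ convg n k n @ dg n k n"

lemma full_run:
  assumes n: "1 \<le> n"
  shows "(\<forall>x<2^(mm n k). run (mm n k) (fullg n k) (v0 n k d \<psi>) x = Psi n k d \<psi> x) \<and> vg (mm n k) (fullg n k)"
proof -
  let ?m = "mm n k"
  define V1 where "V1 = run ?m (hg n k n) (v0 n k d \<psi>)"
  have H: "\<forall>x<2^?m. V1 x = h2 ^ n * v0 n k d \<psi> (cl n k n x)" "vg ?m (hg n k n)"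
    using H_run[OF n order.refl, of k d \<psi>] unfolding V1_def by auto
  have A: "pm ?m (ag n k n) (am n k n)" "vg ?m (ag n k n)" using pm_am[of n n k] by auto
  have X: "pm ?m (xg n k n) (xm n k n)" "vg ?m (xg n k n)" using pm_xm[of n n k] by auto
  have AX: "pm ?m (ag n k n @ xg n k n) (\<lambda>x. am n k n (xm n k n x))" by (rule pm_append[OF A(1) X(1)])
  define V2 where "V2 = run ?m (ag n k n @ xg n k n) V1"
  have V2: "\<forall>x<2^?m. V2 x = Phi n k d \<psi> 0 x"
  proof (intro allI impI)
    fix x :: nat assume x: "x < 2^?m"
    have "V2 x = V1 (am n k n (xm n k n x))" using AX x unfolding V2_def pm_def by blast
    also have "\<dots> = h2 ^ n * v0 n k d \<psi> (cl n k n (am n k n (xm n k n x)))"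
      using H(1) AX x unfolding pm_def by blast
    also have "\<dots> = Phi n k d \<psi> 0 x" using L3[OF n x] unfolding yy_def[OF n] by simp
    finally show "V2 x = Phi n k d \<psi> 0 x" .
  qed
  have C: "\<forall>x<2^?m. run ?m (convg n k n) V2 x = Phi n k d \<psi> n x" "vg ?m (convg n k n)"
    using conv_run[OF V2 order.refl] by auto
  have D: "pm ?m (dg n k n) (dm n k n)" "vg ?m (dg n k n)" using dm_pm[of n n k] by auto
  show ?thesis
  proof (intro conjI allI impI)
    fix x :: nat assume x: "x < 2^?m"
    have "run ?m (fullg n k) (v0 n k d \<psi>) x = run ?m (dg n k n) (run ?m (convg n k n) V2) x"
      unfolding fullg_def V2_def V1_def by (simp add: run_append)
    also have "\<dots> = run ?m (convg n k n) V2 (dm n k n x)" using D(1) x unfolding pm_def by blast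
    also have "\<dots> = Phi n k d \<psi> n (dm n k n x)" using C(1) D(1) x unfolding pm_def by blast
    also have "\<dots> = Psi n k d \<psi> x" by (rule Phi_dm)
    finally show "run ?m (fullg n k) (v0 n k d \<psi>) x = Psi n k d \<psi> x" .
  next
    show "vg ?m (fullg n k)" unfolding fullg_def using H(2) A(2) X(2) C(2) D(2) by simp
  qed
qed


lemma int_exp:
  fixes N :: int
  shows "integral {0..2*pi} (\<lambda>t. exp (\<i> * complex_of_real (of_int N * t))) = (if N = 0 then complex_of_real (2*pi) else 0)"
proof (cases "N = 0")
  case True thus ?thesis by (simp add: integral_const scaleR_conv_of_real)
next
  case False
  define A where "A = \<i> * of_int N"
  have A0: "A \<noteq> 0" using False by (simp add: A_def)
  have e: "exp (t *\<^sub>R A) = exp (\<i> * complex_of_real (of_int N * t))" for t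
    by (simp add: A_def scaleR_conv_of_real mult_ac)
  have "((\<lambda>t. exp (t *\<^sub>R A) * A) has_integral (exp ((2*pi) *\<^sub>R A) - exp (0 *\<^sub>R A))) {0..2*pi}"
    by (rule fundamental_theorem_of_calculus) (auto intro: exp_scaleR_has_vector_derivative_right)
  moreover have "exp ((2*pi) *\<^sub>R A) = 1"
  proof -
    have "(2*pi) *\<^sub>R A = complex_of_real (2 * of_int N * pi) * \<i>" by (simp add: A_def scaleR_conv_of_real mult_ac)
    thus ?thesis using exp_integer_2pi[of "of_int N"] by simp
  qed
  ultimately have "((\<lambda>t. exp (t *\<^sub>R A) * A) has_integral 0) {0..2*pi}" by simp
  from has_integral_mult_right[OF this, of "inverse A"]
  moreover have "(\<lambda>x. inverse A * (exp (x *\<^sub>R A) * A)) = (\<lambda>t. exp (t *\<^sub>R A))"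
    using A0 by (auto simp: field_simps)
  ultimately have "((\<lambda>t. exp (t *\<^sub>R A)) has_integral 0) {0..2*pi}" by simp
  hence "((\<lambda>t. exp (\<i> * complex_of_real (of_int N * t))) has_integral 0) {0..2*pi}" by (simp add: e)
  thus ?thesis using False by (simp add: integral_unique)
qed

lemma sum_split_mult: "(\<Sum>t<A*B. f t) = (\<Sum>t'<B. \<Sum>u<A. f (u + A * t'))" for A B :: nat
proof -
  have "(\<Sum>t<B*A. f t) = (\<Sum>m<B. sum f {m * A..<m * A + A})" by (rule sum.nat_group[symmetric])
  also have "\<dots> = (\<Sum>m<B. \<Sum>u<A. f (u + A * m))"
  proof (rule sum.cong[OF refl])
    fix m
    have "sum f {0 + m * A..<A + m * A} = (\<Sum>i = 0..<A. f (i + m * A))" by (rule sum.shift_bounds_nat_ivl)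
    thus "sum f {m * A..<m * A + A} = (\<Sum>u<A. f (u + A * m))" by (simp add: add.commute mult.commute atLeast0LessThan)
  qed
  finally show ?thesis by (simp add: mult.commute)
qed

lemma sum_even_odd: "(\<Sum>u<2 * M. f u) = (\<Sum>v<M. f (2 * v)) + (\<Sum>v<M. f (2 * v + 1))" for M :: nat
  by (induction M) (simp_all add: algebra_simps)

lemma blk_0: "u < 2^s \<Longrightarrow> blk s 0 (u + 2^s * t) = u"
  by (simp add: blk_def)

lemma blk_Suc: "u < 2^s \<Longrightarrow> blk s (Suc i) (u + 2^s * t) = blk s i t"
proof -
  assume u: "u < 2^s"
  have "(u + 2 ^ s * t) div 2 ^ (Suc i * s) = (u + 2 ^ s * t) div 2 ^ s div 2 ^ (i * s)"
    by (simp add: power_add div_mult2_eq)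
  also have "(u + 2^s * t) div 2^s = t" using u by simp
  finally show ?thesis by (simp add: blk_def)
qed

lemma blk_prod_sum:
  fixes h :: "nat \<Rightarrow> nat \<Rightarrow> 'a::comm_semiring_1"
  shows "(\<Sum>t<2^(s*n). \<Prod>i<n. h i (blk s i t)) = (\<Prod>i<n. \<Sum>u<2^s. h i u)"
proof (induction n arbitrary: h)
  case 0 thus ?case by simp
next
  case (Suc n)
  have "(\<Sum>t<2^(s*Suc n). \<Prod>i<Suc n. h i (blk s i t)) =
        (\<Sum>t'<2^(s*n). \<Sum>u<2^s. \<Prod>i<Suc n. h i (blk s i (u + 2^s * t')))"
    by (subst sum_split_mult[symmetric]) (simp add: power_add mult.commute)
  also have "\<dots> = (\<Sum>t'<2^(s*n). \<Sum>u<2^s. h 0 u * (\<Prod>i<n. h (Suc i) (blk s i t')))"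
    by (intro sum.cong refl, subst prod.lessThan_Suc_shift) (simp add: blk_0 blk_Suc)
  also have "\<dots> = (\<Sum>u<2^s. h 0 u) * (\<Sum>t'<2^(s*n). \<Prod>i<n. h (Suc i) (blk s i t'))"
    by (simp add: sum_distrib_left sum_distrib_right sum.swap[of _ "{..<2^(s*n)}"])
  also have "\<dots> = (\<Sum>u<2^s. h 0 u) * (\<Prod>i<n. \<Sum>u<2^s. h (Suc i) u)" using Suc.IH[of "\<lambda>i. h (Suc i)"] by simp
  also have "\<dots> = (\<Prod>i<Suc n. \<Sum>u<2^s. h i u)" by (subst prod.lessThan_Suc_shift) simp
  finally show ?case .
qed

lemma bit_add_pow: "a < 2^M \<Longrightarrow> bit (a + 2^M * t) p = (if p < M then bit a p else bit t (p - M))" for a t :: nat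
proof -
  assume a: "a < 2^M"
  have "a + 2^M * t = or a (push_bit M t)"
  proof -
    have "\<not> bit a q \<or> \<not> bit (push_bit M t) q" for q
      using a by (auto simp: bit_push_bit_iff_nat less_pow2_iff)
    hence "a + push_bit M t = or a (push_bit M t)" by (rule disjunctive_add)
    thus ?thesis by (simp add: push_bit_eq_mult mult.commute)
  qed
  thus ?thesis using a by (auto simp: bit_or_iff bit_push_bit_iff_nat less_pow2_iff)
qed


lemma blk_add_pow:
  assumes a: "a < 2 ^ (n * s)"
  shows "blk s j (a + 2 ^ (n * s) * t) = (if j < n then blk s j a else blk s (j - n) t)"
proof (rule bit_eqI)
  fix b
  show "bit (blk s j (a + 2 ^ (n * s) * t)) b = bit (if j < n then blk s j a else blk s (j - n) t) b"
  proof (cases "b < s")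
    case True
    have lt: "j * s + b < n * s \<longleftrightarrow> j < n"
    proof
      assume "j * s + b < n * s"
      hence "j * s < n * s" by linarith
      thus "j < n" by (simp add: mult_less_cancel2)
    next
      assume "j < n"
      have "j * s + b < Suc j * s" using True by simp
      moreover have "Suc j * s \<le> n * s" using `j < n` by (intro mult_le_mono1) simp
      ultimately show "j * s + b < n * s" by linarith
    qed
    have e: "\<not> j < n \<Longrightarrow> j * s + b - n * s = (j - n) * s + b"
      by (simp add: diff_mult_distrib)
    show ?thesis using True lt e by (simp add: bit_blk bit_add_pow[OF a])
  next
    case False thus ?thesis by (simp add: bit_blk)
  qed
qed

lemma prod_split2: "(\<Prod>j<2*n. f j) = (\<Prod>j<n. f j) * (\<Prod>i<n. f (n + i))" for f :: "nat \<Rightarrow> 'a::comm_monoid_mult"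
proof -
  have "(\<Prod>j<n + m. f j) = (\<Prod>j<n. f j) * (\<Prod>i<m. f (n + i))" for m
    by (induction m) (simp_all add: mult.assoc)
  from this[of n] show ?thesis by (simp add: mult_2)
qed

lemma prod_of_bool: "(\<Prod>i<(n::nat). (of_bool (P i) :: 'a::comm_semiring_1)) = of_bool (\<forall>i<n. P i)"
  by (induction n) (auto simp: less_Suc_eq)

definition GA :: "nat \<Rightarrow> nat \<Rightarrow> nat \<Rightarrow> (nat \<Rightarrow> complex) \<Rightarrow> nat \<Rightarrow> complex" where
  "GA n k d \<psi> a = (\<Prod>j<n. gv d \<psi> (blk (Suc k) j a))"
definition AA :: "nat \<Rightarrow> nat \<Rightarrow> nat \<Rightarrow> nat" where
  "AA n k a = card {j. j < n \<and> odd (blk (Suc k) j a)}"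
definition QQ :: "nat \<Rightarrow> nat \<Rightarrow> nat \<Rightarrow> (nat \<Rightarrow> complex) \<Rightarrow> nat \<Rightarrow> nat \<Rightarrow> complex" where
  "QQ n k d \<psi> A t = (\<Prod>i<n. gv d \<psi> (blk (Suc k) i t)) *
     of_bool ((\<forall>j<n. \<not> bit t (n * Suc k + j)) \<and> (\<forall>i<n. odd (blk (Suc k) i t) = (A \<le> i)))"

lemma Psi_dec:
  assumes a: "a < 2 ^ (n * Suc k)"
  shows "Psi n k d \<psi> (a + 2 ^ (n * Suc k) * t) = h2 ^ n * GA n k d \<psi> a * QQ n k d \<psi> (AA n k a) t"
proof -
  let ?x = "a + 2 ^ (n * Suc k) * t"
  have b: "\<And>j. blk (Suc k) j ?x = (if j < n then blk (Suc k) j a else blk (Suc k) (j - n) t)"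
    by (rule blk_add_pow[OF a])
  have c: "bit ?x (cpos n k j) = bit t (n * Suc k + j)" for j
  proof -
    have e: "cpos n k j = n * Suc k + (n * Suc k + j)" by (simp add: cpos_def)
    show ?thesis unfolding e bit_add_pow[OF a] by simp
  qed
  have G: "GG n k d \<psi> ?x = GA n k d \<psi> a * (\<Prod>i<n. gv d \<psi> (blk (Suc k) i t))"
    unfolding GG_def prod_split2 GA_def b by simp
  have A: "card {j. j < n \<and> odd (blk (Suc k) j ?x)} = AA n k a"
    unfolding AA_def b by (rule arg_cong[where f=card]) auto
  have F: "fin n k ?x \<longleftrightarrow> (\<forall>j<n. \<not> bit t (n * Suc k + j)) \<and> (\<forall>i<n. odd (blk (Suc k) i t) = (AA n k a \<le> i))"
  proof -
    have "(\<forall>j. n \<le> j \<and> j < 2*n \<longrightarrow> odd (blk (Suc k) j ?x) = (n + AA n k a \<le> j)) \<longleftrightarrow>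
          (\<forall>i<n. odd (blk (Suc k) i t) = (AA n k a \<le> i))"
    proof
      assume h: "\<forall>j. n \<le> j \<and> j < 2*n \<longrightarrow> odd (blk (Suc k) j ?x) = (n + AA n k a \<le> j)"
      show "\<forall>i<n. odd (blk (Suc k) i t) = (AA n k a \<le> i)"
      proof (intro allI impI)
        fix i assume i: "i < n"
        have "odd (blk (Suc k) (n + i) ?x) = (n + AA n k a \<le> n + i)" using h i by simp
        moreover have "blk (Suc k) (n + i) ?x = blk (Suc k) i t" using b[of "n + i"] by simp
        ultimately show "odd (blk (Suc k) i t) = (AA n k a \<le> i)" by simp
      qed
    next
      assume h: "\<forall>i<n. odd (blk (Suc k) i t) = (AA n k a \<le> i)"
      show "\<forall>j. n \<le> j \<and> j < 2*n \<longrightarrow> odd (blk (Suc k) j ?x) = (n + AA n k a \<le> j)"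
      proof (intro allI impI)
        fix j assume j: "n \<le> j \<and> j < 2*n"
        hence jn: "j - n < n" by linarith
        have "blk (Suc k) j ?x = blk (Suc k) (j - n) t" using b[of j] j by simp
        moreover have "odd (blk (Suc k) (j - n) t) = (AA n k a \<le> j - n)" using h jn by simp
        ultimately show "odd (blk (Suc k) j ?x) = (n + AA n k a \<le> j)" using j by auto
      qed
    qed
    thus ?thesis unfolding fin_def c A by simp
  qed
  show ?thesis unfolding Psi_def G F QQ_def by (simp add: mult_ac)
qed

lemma cnj_of_bool[simp]: "cnj (of_bool b) = of_bool b" by (cases b) simp_all

lemma of_bool_sq[simp]: "(of_bool b :: 'a::comm_semiring_1) * of_bool b = of_bool b" by (cases b) simp_all

lemma gvsum:
  assumes d: "d \<le> 2^k" and nrm: "(\<Sum>j<d. (cmod (\<psi> j))\<^sup>2) = 1"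
  shows "(\<Sum>u<2^(Suc k). gv d \<psi> u * cnj (gv d \<psi> u) * of_bool (odd u = c)) = 1"
proof -
  have ev: "gv d \<psi> (2 * v) = of_bool (v = 0)" for v by (simp add: gv_def)
  have od: "gv d \<psi> (2 * v + 1) = ext_vec d \<psi> v" for v by (simp add: gv_def)
  have s1: "(\<Sum>v<2^k. ext_vec d \<psi> v * cnj (ext_vec d \<psi> v)) = 1"
  proof -
    have "(\<Sum>v<2^k. ext_vec d \<psi> v * cnj (ext_vec d \<psi> v)) = (\<Sum>v<d. ext_vec d \<psi> v * cnj (ext_vec d \<psi> v))"
      by (rule sum.mono_neutral_right) (use d in \<open>auto simp: ext_vec_def\<close>)
    also have "\<dots> = (\<Sum>v<d. complex_of_real ((cmod (\<psi> v))\<^sup>2))"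
    proof (intro sum.cong refl)
      fix v assume "v \<in> {..<d}"
      hence "ext_vec d \<psi> v = \<psi> v" by (simp add: ext_vec_def)
      thus "ext_vec d \<psi> v * cnj (ext_vec d \<psi> v) = complex_of_real ((cmod (\<psi> v))\<^sup>2)"
        by (simp only: complex_norm_square)
    qed
    also have "\<dots> = 1" by (simp only: of_real_sum[symmetric] nrm of_real_1)
    finally show ?thesis .
  qed
  have s0: "(\<Sum>v<(2::nat)^k. (of_bool (v = 0) :: complex)) = 1"
    by (simp add: of_bool_def sum.delta)
  have "(\<Sum>u<2^(Suc k). gv d \<psi> u * cnj (gv d \<psi> u) * of_bool (odd u = c)) =
        (\<Sum>v<2^k. gv d \<psi> (2 * v) * cnj (gv d \<psi> (2 * v)) * of_bool (odd (2 * v) = c)) +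
        (\<Sum>v<2^k. gv d \<psi> (2 * v + 1) * cnj (gv d \<psi> (2 * v + 1)) * of_bool (odd (2 * v + 1) = c))"
    by (subst power_Suc, rule sum_even_odd)
  also have "\<dots> = (\<Sum>v<(2::nat)^k. of_bool (v = 0) * of_bool (\<not> c)) + (\<Sum>v<(2::nat)^k. ext_vec d \<psi> v * cnj (ext_vec d \<psi> v) * of_bool c)"
    unfolding ev od by simp
  also have "\<dots> = 1" using s0 s1 by (cases c) (simp_all flip: sum_distrib_right)
  finally show ?thesis .
qed

lemma AA_le: "AA n k a \<le> n"
proof -
  have "AA n k a \<le> card {..<n}" unfolding AA_def by (rule card_mono) auto
  thus ?thesis by simp
qed

lemma S_lemma:
  assumes d: "d \<le> 2^k" and nrm: "(\<Sum>j<d. (cmod (\<psi> j))\<^sup>2) = 1" and AB: "A \<le> n" "B \<le> n"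
  shows "(\<Sum>t<2^(n * Suc k + n). QQ n k d \<psi> A t * cnj (QQ n k d \<psi> B t)) = of_bool (A = B)"
proof -
  let ?N = "n * Suc k"
  define P where "P A' t1 = (\<Prod>i<n. gv d \<psi> (blk (Suc k) i t1)) * of_bool (\<forall>i<n. odd (blk (Suc k) i t1) = (A' \<le> i))" for A' t1
  define h where "h i u = gv d \<psi> u * cnj (gv d \<psi> u) * of_bool (odd u = (A \<le> i)) * of_bool (odd u = (B \<le> i))" for i u
  have Q: "QQ n k d \<psi> A' (t1 + 2^?N * t2) = (if t2 = 0 then P A' t1 else 0)"
    if t1: "t1 < 2^?N" and t2: "t2 < 2^n" for A' t1 t2
  proof -
    have b: "blk (Suc k) i (t1 + 2^?N * t2) = blk (Suc k) i t1" if "i < n" for i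
      using blk_add_pow[OF t1, of i t2] that by simp
    have c: "bit (t1 + 2^?N * t2) (?N + j) = bit t2 j" for j
      using bit_add_pow[OF t1, of t2 "?N + j"] by simp
    have z: "(\<forall>j<n. \<not> bit t2 j) \<longleftrightarrow> t2 = 0"
    proof
      assume "\<forall>j<n. \<not> bit t2 j"
      hence "\<forall>j. \<not> bit t2 j" using t2 unfolding less_pow2_iff by (meson not_le)
      thus "t2 = 0" by (intro bit_eqI) auto
    qed simp
    show ?thesis unfolding QQ_def P_def c z using b by (auto intro!: prod.cong)
  qed
  have X: "P A t1 * cnj (P B t1) = (\<Prod>i<n. h i (blk (Suc k) i t1))" for t1
    unfolding P_def h_def prod_of_bool[symmetric] cnj_prod prod.distrib[symmetric] by (simp add: mult_ac)
  have "(\<Sum>t<2^(?N + n). QQ n k d \<psi> A t * cnj (QQ n k d \<psi> B t)) =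
        (\<Sum>t2<2^n. \<Sum>t1<2^?N. QQ n k d \<psi> A (t1 + 2^?N * t2) * cnj (QQ n k d \<psi> B (t1 + 2^?N * t2)))"
    by (subst sum_split_mult[symmetric]) (simp add: power_add)
  also have "\<dots> = (\<Sum>t2<(2::nat)^n. if t2 = 0 then (\<Sum>t1<2^?N. P A t1 * cnj (P B t1)) else 0)"
  proof (rule sum.cong[OF refl])
    fix t2 :: nat assume t2: "t2 \<in> {..<2^n}"
    have t2': "t2 < 2^n" using t2 by simp
    have "(\<Sum>t1<2^?N. QQ n k d \<psi> A (t1 + 2^?N * t2) * cnj (QQ n k d \<psi> B (t1 + 2^?N * t2))) =
          (\<Sum>t1<2^?N. if t2 = 0 then P A t1 * cnj (P B t1) else 0)"
    proof (rule sum.cong[OF refl])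
      fix t1 :: nat assume t1: "t1 \<in> {..<2^?N}"
      have t1': "t1 < 2^?N" using t1 by simp
      show "QQ n k d \<psi> A (t1 + 2^?N * t2) * cnj (QQ n k d \<psi> B (t1 + 2^?N * t2)) =
            (if t2 = 0 then P A t1 * cnj (P B t1) else 0)"
        unfolding Q[OF t1' t2'] by simp
    qed
    also have "\<dots> = (if t2 = 0 then (\<Sum>t1<2^?N. P A t1 * cnj (P B t1)) else 0)" by simp
    finally show "(\<Sum>t1<2^?N. QQ n k d \<psi> A (t1 + 2^?N * t2) * cnj (QQ n k d \<psi> B (t1 + 2^?N * t2))) =
          (if t2 = 0 then (\<Sum>t1<2^?N. P A t1 * cnj (P B t1)) else 0)" .
  qed
  also have "\<dots> = (\<Sum>t1<2^?N. P A t1 * cnj (P B t1))" by (simp add: sum.delta')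
  also have "\<dots> = (\<Sum>t1<2^(Suc k * n). \<Prod>i<n. h i (blk (Suc k) i t1))" by (simp add: X mult.commute)
  also have "\<dots> = (\<Prod>i<n. \<Sum>u<2^(Suc k). h i u)" by (rule blk_prod_sum)
  also have "\<dots> = (\<Prod>i<n. of_bool ((A \<le> i) = (B \<le> i)))"
  proof (intro prod.cong refl)
    fix i
    show "(\<Sum>u<2^(Suc k). h i u) = of_bool ((A \<le> i) = (B \<le> i))"
    proof (cases "(A \<le> i) = (B \<le> i)")
      case True
      have "(\<Sum>u<2^(Suc k). h i u) = (\<Sum>u<2^(Suc k). gv d \<psi> u * cnj (gv d \<psi> u) * of_bool (odd u = (A \<le> i)))"
        by (intro sum.cong refl) (simp add: h_def True mult.assoc)
      thus ?thesis using gvsum[OF d nrm] True by simp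
    next
      case False
      have "h i u = 0" for u unfolding h_def using False by (cases "odd u"; cases "A \<le> i"; cases "B \<le> i") auto
      thus ?thesis using False by simp
    qed
  qed
  also have "\<dots> = of_bool (\<forall>i<n. (A \<le> i) = (B \<le> i))" by (rule prod_of_bool)
  also have "(\<forall>i<n. (A \<le> i) = (B \<le> i)) \<longleftrightarrow> A = B"
  proof
    assume h: "\<forall>i<n. (A \<le> i) = (B \<le> i)"
    show "A = B"
    proof (rule ccontr)
      assume "A \<noteq> B"
      hence "min A B < n" "(A \<le> min A B) \<noteq> (B \<le> min A B)" using AB by auto
      thus False using h by blast
    qed
  qed simp
  finally show ?thesis .
qed

lemma chan_sum:
  assumes d: "d \<le> 2^k" and nrm: "(\<Sum>j<d. (cmod (\<psi> j))\<^sup>2) = 1"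
    and a: "a < 2 ^ (n * Suc k)" and b: "b < 2 ^ (n * Suc k)"
  shows "(\<Sum>t<2^(n * Suc k + n). Psi n k d \<psi> (a + 2 ^ (n * Suc k) * t) * cnj (Psi n k d \<psi> (b + 2 ^ (n * Suc k) * t)))
       = h2 ^ (2*n) * GA n k d \<psi> a * cnj (GA n k d \<psi> b) * of_bool (AA n k a = AA n k b)"
proof -
  have "(\<Sum>t<2^(n * Suc k + n). Psi n k d \<psi> (a + 2 ^ (n * Suc k) * t) * cnj (Psi n k d \<psi> (b + 2 ^ (n * Suc k) * t)))
      = (\<Sum>t<2^(n * Suc k + n). (h2 ^ (2*n) * GA n k d \<psi> a * cnj (GA n k d \<psi> b)) *
           (QQ n k d \<psi> (AA n k a) t * cnj (QQ n k d \<psi> (AA n k b) t)))"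
  proof (intro sum.cong refl)
    fix t
    have hh: "h2 ^ n * h2 ^ n = h2 ^ (2 * n)" by (simp add: power_add[symmetric] mult_2)
    show "Psi n k d \<psi> (a + 2 ^ (n * Suc k) * t) * cnj (Psi n k d \<psi> (b + 2 ^ (n * Suc k) * t)) =
      (h2 ^ (2*n) * GA n k d \<psi> a * cnj (GA n k d \<psi> b)) * (QQ n k d \<psi> (AA n k a) t * cnj (QQ n k d \<psi> (AA n k b) t))"
      unfolding Psi_dec[OF a] Psi_dec[OF b] hh[symmetric] by (simp add: mult_ac)
  qed
  also have "\<dots> = h2 ^ (2*n) * GA n k d \<psi> a * cnj (GA n k d \<psi> b) * of_bool (AA n k a = AA n k b)"
    unfolding sum_distrib_left[symmetric] S_lemma[OF d nrm AA_le AA_le] ..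
  finally show ?thesis .
qed


definition ZZ :: "nat \<Rightarrow> nat \<Rightarrow> nat \<Rightarrow> nat" where
  "ZZ n k a = card {j. j < n \<and> blk (Suc k) j a = 0}"

lemma cs_eq: "cond_sample d \<psi> \<theta> c = gv d \<psi> c * (if c = 0 then exp (\<i> * complex_of_real \<theta>) else 1) * h2"
proof -
  have "even c \<Longrightarrow> c \<noteq> 0 \<Longrightarrow> c div 2 \<noteq> 0" by auto
  thus ?thesis by (cases "odd c"; cases "c = 0") (auto simp: cond_sample_def gv_def h2_def)
qed

lemma prod_if_pow: "(\<Prod>i<(n::nat). if P i then (e::complex) else 1) = e ^ card {i. i < n \<and> P i}"
proof -
  have "(\<Prod>i<n. if P i then e else 1) = (\<Prod>i\<in>{..<n} \<inter> {i. P i}. e) * (\<Prod>i\<in>{..<n} \<inter> - {i. P i}. 1)"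
    by (rule prod.If_cases) simp
  also have "{..<n} \<inter> {i. P i} = {i. i < n \<and> P i}" by auto
  finally show ?thesis by simp
qed

lemma prod_cs: "(\<Prod>i<n. cond_sample d \<psi> \<theta> (blk (Suc k) i a)) =
    h2 ^ n * GA n k d \<psi> a * exp (\<i> * complex_of_real \<theta>) ^ ZZ n k a"
  unfolding cs_eq prod.distrib prod_if_pow GA_def ZZ_def by (simp add: mult_ac)

lemma target_eq:
  assumes k: "k = qbits d"
  shows "target_state n d \<psi> a b = h2 ^ (2*n) * GA n k d \<psi> a * cnj (GA n k d \<psi> b) * of_bool (ZZ n k a = ZZ n k b)"
proof -
  define K where "K = h2 ^ (2*n) * GA n k d \<psi> a * cnj (GA n k d \<psi> b)"
  define N :: int where "N = int (ZZ n k a) - int (ZZ n k b)"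
  have cnjh: "cnj (h2 ^ n) = h2 ^ n" by simp
  have hh: "h2 ^ n * h2 ^ n = h2 ^ (2 * n)" by (simp add: power_add[symmetric] mult_2)
  have ex: "exp (\<i> * complex_of_real \<theta>) ^ ZZ n k a * cnj (exp (\<i> * complex_of_real \<theta>) ^ ZZ n k b)
        = exp (\<i> * complex_of_real (of_int N * \<theta>))" for \<theta>
  proof -
    let ?w = "\<i> * complex_of_real \<theta>"
    have c: "cnj (exp ?w) = exp (- ?w)" by (simp add: exp_cnj)
    have "exp ?w ^ ZZ n k a * cnj (exp ?w ^ ZZ n k b) = exp ?w ^ ZZ n k a * exp (- ?w) ^ ZZ n k b"
      by (simp only: complex_cnj_power c)
    also have "\<dots> = exp (of_nat (ZZ n k a) * ?w) * exp (of_nat (ZZ n k b) * (- ?w))"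
      by (simp only: exp_of_nat_mult)
    also have "\<dots> = exp (of_nat (ZZ n k a) * ?w + of_nat (ZZ n k b) * (- ?w))"
      by (simp only: exp_add)
    also have "\<dots> = exp (\<i> * complex_of_real (of_int N * \<theta>))"
      by (rule arg_cong[where f=exp]) (simp add: N_def algebra_simps)
    finally show ?thesis .
  qed
  have I: "(\<lambda>\<theta>. (\<Prod>i<n. cond_sample d \<psi> \<theta> (blk (qbits d + 1) i a)) * cnj (\<Prod>i<n. cond_sample d \<psi> \<theta> (blk (qbits d + 1) i b)))
         = (\<lambda>\<theta>. K * exp (\<i> * complex_of_real (of_int N * \<theta>)))"
  proof
    fix \<theta>
    have "(\<Prod>i<n. cond_sample d \<psi> \<theta> (blk (qbits d + 1) i a)) * cnj (\<Prod>i<n. cond_sample d \<psi> \<theta> (blk (qbits d + 1) i b))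
        = (h2 ^ n * h2 ^ n * GA n k d \<psi> a * cnj (GA n k d \<psi> b)) *
          (exp (\<i> * complex_of_real \<theta>) ^ ZZ n k a * cnj (exp (\<i> * complex_of_real \<theta>) ^ ZZ n k b))"
      using prod_cs[where n=n and d=d and \<psi>=\<psi> and \<theta>=\<theta> and k=k] unfolding k[symmetric] by (simp add: mult_ac)
    thus "(\<Prod>i<n. cond_sample d \<psi> \<theta> (blk (qbits d + 1) i a)) * cnj (\<Prod>i<n. cond_sample d \<psi> \<theta> (blk (qbits d + 1) i b))
        = K * exp (\<i> * complex_of_real (of_int N * \<theta>))" unfolding ex hh K_def .
  qed
  have "N = 0 \<longleftrightarrow> ZZ n k a = ZZ n k b" by (simp add: N_def)
  moreover have "pi \<noteq> 0" by simp
  ultimately show ?thesis unfolding target_state_def I integral_mult_right int_exp K_def[symmetric]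
    by auto
qed

lemma ZA_sum:
  assumes "GA n k d \<psi> a \<noteq> 0"
  shows "ZZ n k a + AA n k a = n"
proof -
  have "\<forall>j<n. gv d \<psi> (blk (Suc k) j a) \<noteq> 0"
  proof (intro allI impI)
    fix j assume "j < n"
    thus "gv d \<psi> (blk (Suc k) j a) \<noteq> 0" using assms unfolding GA_def by (auto simp: prod_zero_iff)
  qed
  have z: "\<forall>j<n. blk (Suc k) j a = 0 \<or> odd (blk (Suc k) j a)"
  proof (intro allI impI)
    fix j assume j: "j < n"
    show "blk (Suc k) j a = 0 \<or> odd (blk (Suc k) j a)"
    proof (rule ccontr)
      assume "\<not> (blk (Suc k) j a = 0 \<or> odd (blk (Suc k) j a))"
      hence "gv d \<psi> (blk (Suc k) j a) = 0" by (simp add: gv_def)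
      thus False using j `\<forall>j<n. gv d \<psi> (blk (Suc k) j a) \<noteq> 0` by blast
    qed
  qed
  have "{j. j < n \<and> blk (Suc k) j a = 0} \<union> {j. j < n \<and> odd (blk (Suc k) j a)} = {..<n}" using z by auto
  moreover have "{j. j < n \<and> blk (Suc k) j a = 0} \<inter> {j. j < n \<and> odd (blk (Suc k) j a)} = {}" by auto
  ultimately have "card {j. j < n \<and> blk (Suc k) j a = 0} + card {j. j < n \<and> odd (blk (Suc k) j a)} = n"
    by (metis card_Un_disjoint card_lessThan finite_Collect_conjI finite_Collect_less_nat)
  thus ?thesis by (simp add: ZZ_def AA_def)
qed

lemma final_eq:
  "h2 ^ (2*n) * GA n k d \<psi> a * cnj (GA n k d \<psi> b) * of_bool (AA n k a = AA n k b) =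
   h2 ^ (2*n) * GA n k d \<psi> a * cnj (GA n k d \<psi> b) * of_bool (ZZ n k a = ZZ n k b)"
proof (cases "GA n k d \<psi> a = 0 \<or> GA n k d \<psi> b = 0")
  case True thus ?thesis by auto
next
  case False
  hence "ZZ n k a + AA n k a = n" "ZZ n k b + AA n k b = n" using ZA_sum by auto
  hence "(AA n k a = AA n k b) = (ZZ n k a = ZZ n k b)" by auto
  thus ?thesis by simp
qed


lemma len_fred: "length (fredg c p q) = 9" by (simp add: fredg_def toffg_def cczg_def)
lemma len_rsg: "length (rsg k c j t) = t * 9" by (induction t) (simp_all add: len_fred)
lemma len_rotg: "length (rotg k c i L) = L * (Suc k * 9)" by (induction L arbitrary: i) (simp_all add: len_rsg len_fred)
lemma len_bswg: "length (bswg P Q t) = t" by (induction t) simp_all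
lemma len_ag: "length (ag n k i) = i * k" by (induction i) (simp_all add: ag_def len_bswg)
lemma len_hg: "length (hg n k i) = i" by (simp add: hg_def)
lemma len_xg: "length (xg n k i) = i" by (simp add: xg_def)
lemma len_dg: "length (dg n k i) = i" by (simp add: dg_def)
lemma len_convg: "length (convg n k i) \<le> i * (2 * n * (Suc k * 9))"
proof (induction i)
  case 0 thus ?case by (simp add: convg_def)
next
  case (Suc i)
  have e: "convg n k (Suc i) = convg n k i @ stepg n k i" by (simp add: convg_def)
  have "length (stepg n k i) \<le> 2 * n * (Suc k * 9)"
    unfolding stepg_def len_rotg by (intro mult_le_mono1) simp
  thus ?case unfolding e using Suc by simp
qed

lemma len_full: "length (fullg n k) \<le> 3 * n + n * k + n * (2 * n * (Suc k * 9))"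
  unfolding fullg_def using len_convg[of n k n] by (simp add: len_hg len_ag len_xg len_dg)

lemma len_full2: "1 \<le> n \<Longrightarrow> length (fullg n k) \<le> 22 * (n * n * Suc k)"
proof -
  assume n: "1 \<le> n"
  have a: "n \<le> n * n * Suc k" using n by (metis mult_le_mono1 mult_1 le_add1 mult_Suc_right mult.commute order_trans le_square)
  have b: "n * k \<le> n * n * Suc k"
  proof -
    have "n * k \<le> n * n * k" using n by (metis mult_le_mono1 mult.commute le_square)
    also have "\<dots> \<le> n * n * Suc k" by simp
    finally show ?thesis .
  qed
  have c: "n * (2 * n * (Suc k * 9)) = 18 * (n * n * Suc k)" by (simp add: algebra_simps)
  show ?thesis using len_full[of n k] a b c by linarith
qed

lemma qbits_props:
  assumes d: "1 \<le> d"
  shows "d \<le> 2 ^ qbits d" "real (qbits d) \<le> log 2 (real d) + 1"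
proof -
  have ex: "d \<le> 2 ^ d" using less_exp[of d] by simp
  show dq: "d \<le> 2 ^ qbits d" unfolding qbits_def by (rule LeastI[of _ d]) (rule ex)
  have lg: "0 \<le> log 2 (real d)" using d by simp
  show "real (qbits d) \<le> log 2 (real d) + 1"
  proof (cases "qbits d")
    case 0 thus ?thesis using lg by simp
  next
    case (Suc q)
    have "q < qbits d" using Suc by simp
    hence "\<not> d \<le> 2 ^ q" unfolding qbits_def by (rule not_less_Least)
    hence "real (2 ^ q) < real d" by simp
    hence "log 2 (real (2 ^ q)) < log 2 (real d)" using d by (subst log_less_cancel_iff) auto
    hence "real q < log 2 (real d)" by (simp add: log_pow_cancel)
    thus ?thesis using Suc by simp
  qed
qed

lemma len_bound:
  assumes n: "1 \<le> n" and d: "1 \<le> d"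
  shows "real (length (fullg n (qbits d))) \<le> 44 * real n ^ 2 * (log 2 (real d) + 1)"
proof -
  let ?k = "qbits d"
  have lg: "0 \<le> log 2 (real d)" using d by simp
  have "real (length (fullg n ?k)) \<le> real (22 * (n * n * Suc ?k))"
    using len_full2[OF n, of ?k] by (simp only: of_nat_le_iff)
  also have "\<dots> = 22 * (real n * real n * (real ?k + 1))" by (simp add: algebra_simps)
  also have "\<dots> \<le> 22 * (real n * real n * (2 * (log 2 (real d) + 1)))"
    using qbits_props(2)[OF d] lg by (intro mult_left_mono) auto
  also have "\<dots> = 44 * real n ^ 2 * (log 2 (real d) + 1)" by (simp add: power2_eq_square)
  finally show ?thesis .
qed


lemma channel_eq:
  assumes n: "1 \<le> n" and d: "1 \<le> d" and k: "k = qbits d"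
    and nrm: "(\<Sum>j<d. (cmod (\<psi> j))\<^sup>2) = 1"
    and a: "a < 2 ^ (n * Suc k)" and b: "b < 2 ^ (n * Suc k)"
  shows "circuit_channel (mm n k) (fullg n k) (n * k) (n * Suc k) (input_state n d \<psi>) a b = target_state n d \<psi> a b"
proof -
  let ?N = "n * Suc k"
  let ?W = "run (mm n k) (fullg n k) (v0 n k d \<psi>)"
  have rho: "(\<lambda>x y. if x < 2 ^ (n * k) \<and> y < 2 ^ (n * k) then input_state n d \<psi> x y else 0) =
             (\<lambda>x y. v0 n k d \<psi> x * cnj (v0 n k d \<psi> y))"
    by (auto simp: input_state_def v0_def k intro!: ext)
  have mN: "mm n k - ?N = ?N + n" by (simp add: mm_def)
  have W: "?W (x + 2 ^ ?N * t) = Psi n k d \<psi> (x + 2 ^ ?N * t)" if x: "x < 2 ^ ?N" and t: "t < 2 ^ (?N + n)" for x t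
  proof -
    have "x + 2 ^ ?N * t < 2 ^ ?N + 2 ^ ?N * t" using x by simp
    also have "\<dots> = 2 ^ ?N * (t + 1)" by (simp add: algebra_simps)
    also have "\<dots> \<le> 2 ^ ?N * 2 ^ (?N + n)" using t by (intro mult_le_mono2) simp
    also have "\<dots> = 2 ^ mm n k" by (simp add: mm_def power_add[symmetric] algebra_simps)
    finally show ?thesis using full_run[OF n, of k d \<psi>] by blast
  qed
  have "circuit_channel (mm n k) (fullg n k) (n * k) (n * Suc k) (input_state n d \<psi>) a b =
        (\<Sum>t<2 ^ (?N + n). ?W (a + 2 ^ ?N * t) * cnj (?W (b + 2 ^ ?N * t)))"
    unfolding circuit_channel_def Let_def rho evolve_run mN ..
  also have "\<dots> = (\<Sum>t<2 ^ (?N + n). Psi n k d \<psi> (a + 2 ^ ?N * t) * cnj (Psi n k d \<psi> (b + 2 ^ ?N * t)))"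
  proof (rule sum.cong[OF refl])
    fix t :: nat assume "t \<in> {..<2 ^ (?N + n)}"
    hence t: "t < 2 ^ (?N + n)" by simp
    show "?W (a + 2 ^ ?N * t) * cnj (?W (b + 2 ^ ?N * t)) = Psi n k d \<psi> (a + 2 ^ ?N * t) * cnj (Psi n k d \<psi> (b + 2 ^ ?N * t))"
      unfolding W[OF a t] W[OF b t] ..
  qed
  also have "\<dots> = h2 ^ (2*n) * GA n k d \<psi> a * cnj (GA n k d \<psi> b) * of_bool (AA n k a = AA n k b)"
    by (rule chan_sum[OF _ nrm a b]) (use qbits_props(1)[OF d] k in simp)
  also have "\<dots> = target_state n d \<psi> a b" unfolding final_eq target_eq[OF k] ..
  finally show ?thesis .
qed

theorem lemma2p2:
  "\<exists>C::real. \<forall>n d::nat. n \<ge> 1 \<longrightarrow> d \<ge> 1 \<longrightarrow>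
     (\<exists>m gs.
        n * (qbits d + 1) \<le> m \<and>
        (\<forall>g\<in>set gs. valid_gate m g) \<and>
        real (length gs) \<le> C * real n ^ 2 * (log 2 (real d) + 1) \<and>
        (\<forall>\<psi> :: nat \<Rightarrow> complex. (\<Sum>j<d. (cmod (\<psi> j))\<^sup>2) = 1 \<longrightarrow>
           (\<forall>a < 2 ^ (n * (qbits d + 1)). \<forall>b < 2 ^ (n * (qbits d + 1)).
              circuit_channel m gs (n * qbits d) (n * (qbits d + 1)) (input_state n d \<psi>) a b
              = target_state n d \<psi> a b)))"
proof (rule exI[of _ "44::real"], intro allI impI)
  fix n d :: nat assume n: "n \<ge> 1" and d: "d \<ge> 1"
  define k where "k = qbits d"
  have c1: "n * (qbits d + 1) \<le> mm n k" by (simp add: mm_def k_def)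
  have c2: "\<forall>g\<in>set (fullg n k). valid_gate (mm n k) g" using full_run[OF n, of k d] by (simp add: vg_def)
  have c3: "real (length (fullg n k)) \<le> 44 * real n ^ 2 * (log 2 (real d) + 1)"
    using len_bound[OF n d] by (simp add: k_def)
  have c4: "\<forall>\<psi> :: nat \<Rightarrow> complex. (\<Sum>j<d. (cmod (\<psi> j))\<^sup>2) = 1 \<longrightarrow>
           (\<forall>a < 2 ^ (n * (qbits d + 1)). \<forall>b < 2 ^ (n * (qbits d + 1)).
              circuit_channel (mm n k) (fullg n k) (n * qbits d) (n * (qbits d + 1)) (input_state n d \<psi>) a b
              = target_state n d \<psi> a b)"
    using channel_eq[OF n d k_def] by (simp add: k_def)
  show "\<exists>m gs. n * (qbits d + 1) \<le> m \<and> (\<forall>g\<in>set gs. valid_gate m g) \<and>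
        real (length gs) \<le> 44 * real n ^ 2 * (log 2 (real d) + 1) \<and>
        (\<forall>\<psi> :: nat \<Rightarrow> complex. (\<Sum>j<d. (cmod (\<psi> j))\<^sup>2) = 1 \<longrightarrow>
           (\<forall>a < 2 ^ (n * (qbits d + 1)). \<forall>b < 2 ^ (n * (qbits d + 1)).
              circuit_channel m gs (n * qbits d) (n * (qbits d + 1)) (input_state n d \<psi>) a b
              = target_state n d \<psi> a b))"
    using c1 c2 c3 c4 by blast
qed


end
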